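(* Let $G=A_{k\ell}$ or $S_{k\ell}$, with $k,\ell\ge 2$ and $k\ell\ge 5$, act on the set of partitions of a $k\ell$-element set into $\ell$ parts of size $k$. Then $G$ is $\tfrac{3}{2}$-transitive if and only if $(k,\ell)=(3,2)$; in that case $G$ is in fact $2$-transitive.
   Context: A finite transitive permutation group $G$ on $\Omega$ is $\tfrac{3}{2}$-transitive if for $\alpha\in\Omega$ all orbits of $G_\alpha$ on $\Omega\setminus\{\alpha\}$ have the same size, greater than $1$. *)

theory Defs
  imports "HOL-Library.Disjoint_Sets" "HOL-Combinatorics.Permutations"
begin

definition transitive_on :: "'g set \<Rightarrow> 'x set \<Rightarrow> ('g \<Rightarrow> 'x \<Rightarrow> 'x) \<Rightarrow> bool" where
  "transitive_on G \<Omega> act \<longleftrightarrow> \<Omega> \<noteq> {} \<and> (\<forall>x\<in>\<Omega>. \<forall>y\<in>\<Omega>. \<exists>g\<in>G. act g x = y)"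

definition stab_orbit :: "'g set \<Rightarrow> ('g \<Rightarrow> 'x \<Rightarrow> 'x) \<Rightarrow> 'x \<Rightarrow> 'x \<Rightarrow> 'x set" where
  "stab_orbit G act \<alpha> \<beta> = {act g \<beta> | g. g \<in> G \<and> act g \<alpha> = \<alpha>}"

definition three_halves_transitive :: "'g set \<Rightarrow> 'x set \<Rightarrow> ('g \<Rightarrow> 'x \<Rightarrow> 'x) \<Rightarrow> bool" where
  "three_halves_transitive G \<Omega> act \<longleftrightarrow> transitive_on G \<Omega> act \<and>
     (\<forall>\<alpha>\<in>\<Omega>. \<exists>m::nat. m > 1 \<and> (\<forall>\<beta>\<in>\<Omega> - {\<alpha>}. card (stab_orbit G act \<alpha> \<beta>) = m))"

definition two_transitive :: "'g set \<Rightarrow> 'x set \<Rightarrow> ('g \<Rightarrow> 'x \<Rightarrow> 'x) \<Rightarrow> bool" where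
  "two_transitive G \<Omega> act \<longleftrightarrow> transitive_on G \<Omega> act \<and>
     (\<forall>\<alpha>\<in>\<Omega>. \<forall>\<beta>\<in>\<Omega>. \<forall>\<gamma>\<in>\<Omega>. \<forall>\<delta>\<in>\<Omega>. \<alpha> \<noteq> \<beta> \<longrightarrow> \<gamma> \<noteq> \<delta> \<longrightarrow>
        (\<exists>g\<in>G. act g \<alpha> = \<gamma> \<and> act g \<beta> = \<delta>))"

definition Sym :: "nat \<Rightarrow> (nat \<Rightarrow> nat) set" where
  "Sym n = {p. p permutes {0..<n}}"

definition Alt :: "nat \<Rightarrow> (nat \<Rightarrow> nat) set" where
  "Alt n = {p. p permutes {0..<n} \<and> evenperm p}"

definition uniform_partitions :: "nat \<Rightarrow> nat \<Rightarrow> nat set set set" where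
  "uniform_partitions k l = {P. partition_on {0..<k*l} P \<and> card P = l \<and> (\<forall>B\<in>P. card B = k)}"

definition part_act :: "(nat \<Rightarrow> nat) \<Rightarrow> nat set set \<Rightarrow> nat set set" where
  "part_act g P = (\<lambda>B. g ` B) ` P"

end

theory Submission
  imports Defs
begin

definition blk :: "nat \<Rightarrow> nat \<Rightarrow> nat set" where "blk k c = {c*k..<c*k+k}"
definition alpha0 :: "nat \<Rightarrow> nat \<Rightarrow> nat set set" where "alpha0 k l = blk k ` {0..<l}"

lemma blk_iff: "0 < k \<Longrightarrow> x \<in> blk k c \<longleftrightarrow> x div k = c"
proof -
  assume k: "0 < k"
  have "x div k = c \<longleftrightarrow> c \<le> x div k \<and> x div k < c + 1" by auto
  also have "\<dots> \<longleftrightarrow> c * k \<le> x \<and> x < (c+1) * k"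
    using less_eq_div_iff_mult_less_eq[OF k] div_less_iff_less_mult[OF k] by simp
  finally show ?thesis unfolding blk_def by (simp add: add.commute)
qed

lemma div_less_l: "0 < k \<Longrightarrow> (x::nat) < k*l \<longleftrightarrow> x div k < l"
  by (metis div_less_iff_less_mult mult.commute)

lemma part_act_comp: "part_act (g \<circ> h) P = part_act g (part_act h P)"
  unfolding part_act_def by (simp add: image_comp image_image)

lemma part_act_id: "part_act id P = P"
  unfolding part_act_def by simp

lemma alpha0_in:
  assumes "0 < k"
  shows "alpha0 k l \<in> uniform_partitions k l"
proof -
  have U: "\<Union>(alpha0 k l) = {0..<k*l}"
  proof
    show "\<Union>(alpha0 k l) \<subseteq> {0..<k*l}"
      using assms by (auto simp: alpha0_def blk_iff div_less_l)
    show "{0..<k*l} \<subseteq> \<Union>(alpha0 k l)"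
    proof
      fix x assume "x \<in> {0..<k*l}"
      then have "x \<in> blk k (x div k)" "x div k < l" using assms by (auto simp: blk_iff div_less_l)
      then show "x \<in> \<Union>(alpha0 k l)" unfolding alpha0_def by auto
    qed
  qed
  have D: "disjoint (alpha0 k l)"
    unfolding disjoint_def alpha0_def using assms by (auto simp: blk_iff)
  have ne: "\<And>c. c*k \<in> blk k c" using assms by (simp add: blk_iff)
  have E: "{} \<notin> alpha0 k l" unfolding alpha0_def using ne by blast
  have inj: "inj_on (blk k) {0..<l}"
    by (rule inj_onI) (metis ne assms blk_iff)
  have C: "card (alpha0 k l) = l" unfolding alpha0_def using card_image[OF inj] by simp
  have B: "\<forall>B\<in>alpha0 k l. card B = k" unfolding alpha0_def blk_def by auto
  show ?thesis unfolding uniform_partitions_def partition_on_def using U D E C B by auto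
qed

lemma part_act_in:
  assumes t: "t permutes {0..<k*l}" and P: "P \<in> uniform_partitions k l"
  shows "part_act t P \<in> uniform_partitions k l"
proof -
  have inj: "inj_on t {0..<k*l}" using t permutes_inj by (metis inj_on_subset subset_UNIV)
  have PP: "partition_on {0..<k*l} P" using P by (simp add: uniform_partitions_def)
  have 1: "partition_on (t ` {0..<k*l}) ((`) t ` P - {{}})" by (rule partition_on_inj_image[OF PP inj])
  have 2: "(`) t ` P - {{}} = part_act t P" unfolding part_act_def using PP partition_onD3 by fastforce
  have injt: "inj t" using t permutes_inj by blast
  have 3: "card (part_act t P) = card P" unfolding part_act_def
    by (rule card_image) (meson inj_image_eq_iff inj_onI injt)
  have 4: "\<forall>B\<in>part_act t P. card B = k" using P injt unfolding part_act_def uniform_partitions_def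
    by (auto simp: card_image inj_on_subset)
  show ?thesis using 1 2 3 4 P permutes_image[OF t] unfolding uniform_partitions_def by auto
qed

lemma perm_lt: assumes "t permutes {0..<(n::nat)}" shows "t x < n \<longleftrightarrow> x < n"
  using permutes_in_image[OF assms, of x] unfolding atLeastLessThan_iff by simp
lemma inv_lt: assumes "t permutes {0..<(n::nat)}" "\<And>x. s (t x) = x" shows "s x < n \<longleftrightarrow> x < n"
  by (metis assms perm_lt permutes_inverses(1) permutes_inverses(2))

lemma blk_image:
  assumes k: "0 < k" and t: "t permutes {0..<k*l}" and st: "\<And>x. s (t x) = x" and ts: "\<And>x. t (s x) = x"
    and c: "c < l"
  shows "t ` blk k c = {y. y < k*l \<and> s y div k = c}"
proof -
  have "y \<in> t ` blk k c \<longleftrightarrow> s y \<in> blk k c" for y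
    by (metis image_iff st ts)
  moreover have "s y \<in> blk k c \<longleftrightarrow> y < k*l \<and> s y div k = c" for y
    using k c inv_lt[OF t st, of y] by (auto simp: blk_iff div_less_l)
  ultimately show ?thesis by auto
qed

lemma mem_part_act:
  assumes k: "0 < k" and t: "t permutes {0..<k*l}" and st: "\<And>x. s (t x) = x" and ts: "\<And>x. t (s x) = x"
  shows "B \<in> part_act t (alpha0 k l) \<longleftrightarrow> (\<exists>c<l. B = {y. y < k*l \<and> s y div k = c})"
proof
  assume "B \<in> part_act t (alpha0 k l)"
  then show "\<exists>c<l. B = {y. y < k*l \<and> s y div k = c}"
    unfolding part_act_def alpha0_def using blk_image[OF k t st ts] by auto
next
  assume "\<exists>c<l. B = {y. y < k*l \<and> s y div k = c}"
  then obtain c where c: "c < l" "B = {y. y < k*l \<and> s y div k = c}" by blast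
  then have "B = t ` blk k c" using blk_image[OF k t st ts] by simp
  then show "B \<in> part_act t (alpha0 k l)" unfolding part_act_def alpha0_def using c by auto
qed

lemma same_block:
  assumes k: "0 < k" and t: "t permutes {0..<k*l}" and st: "\<And>x. s (t x) = x" and ts: "\<And>x. t (s x) = x"
    and t': "t' permutes {0..<k*l}" and st': "\<And>x. s' (t' x) = x" and ts': "\<And>x. t' (s' x) = x"
    and eq: "part_act t (alpha0 k l) = part_act t' (alpha0 k l)"
    and x: "x < k*l" and y: "y < k*l"
  shows "(s x div k = s y div k) \<longleftrightarrow> (s' x div k = s' y div k)"
proof -
  let ?B = "{y. y < k*l \<and> s y div k = s x div k}"
  have "s x div k < l" using inv_lt[OF t st] x k div_less_l by blast
  then have "?B \<in> part_act t (alpha0 k l)" using mem_part_act[OF k t st ts] by blast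
  then have "?B \<in> part_act t' (alpha0 k l)" using eq by simp
  then obtain c where c: "?B = {y. y < k*l \<and> s' y div k = c}" using mem_part_act[OF k t' st' ts'] by blast
  have "x \<in> ?B" using x by simp
  then have "x \<in> {y. y < k*l \<and> s' y div k = c}" unfolding c .
  then have cx: "c = s' x div k" by simp
  have "y \<in> ?B \<longleftrightarrow> y \<in> {y. y < k*l \<and> s' y div k = c}" using c by simp
  then show ?thesis using cx y by (simp add: eq_commute)
qed

lemma conv_block:
  assumes k: "0 < k" and t: "t permutes {0..<k*l}" and st: "\<And>x. s (t x) = x" and ts: "\<And>x. t (s x) = x"
    and t': "t' permutes {0..<k*l}" and st': "\<And>x. s' (t' x) = x" and ts': "\<And>x. t' (s' x) = x"
    and R: "\<And>x y. x < k*l \<Longrightarrow> y < k*l \<Longrightarrow> (s x div k = s y div k) \<longleftrightarrow> (s' x div k = s' y div k)"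
  shows "part_act t (alpha0 k l) = part_act t' (alpha0 k l)"
proof -
  have sub: "part_act t1 (alpha0 k l) \<subseteq> part_act t2 (alpha0 k l)"
    if t1: "t1 permutes {0..<k*l}" and st1: "\<And>x. s1 (t1 x) = x" and ts1: "\<And>x. t1 (s1 x) = x"
    and t2: "t2 permutes {0..<k*l}" and st2: "\<And>x. s2 (t2 x) = x" and ts2: "\<And>x. t2 (s2 x) = x"
    and R: "\<And>x y. x < k*l \<Longrightarrow> y < k*l \<Longrightarrow> (s1 x div k = s1 y div k) \<longleftrightarrow> (s2 x div k = s2 y div k)"
    for t1 s1 t2 s2
  proof
    fix B assume "B \<in> part_act t1 (alpha0 k l)"
    then obtain c where c: "c < l" "B = {y. y < k*l \<and> s1 y div k = c}" using mem_part_act[OF k t1 st1 ts1] by blast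
    define x0 where "x0 = t1 (c*k)"
    have "c*k < k*l" using c k by simp
    then have x0: "x0 < k*l" "s1 x0 = c*k" unfolding x0_def using perm_lt[OF t1] st1 by auto
    have "s1 x0 div k = c" using x0 k by simp
    then have "B = {y. y < k*l \<and> s1 y div k = s1 x0 div k}" using c by simp
    also have "\<dots> = {y. y < k*l \<and> s2 y div k = s2 x0 div k}"
    proof (rule Collect_cong)
      fix y show "(y < k*l \<and> s1 y div k = s1 x0 div k) = (y < k*l \<and> s2 y div k = s2 x0 div k)"
        using R[OF x0(1), of y] by auto
    qed
    finally have "B = {y. y < k*l \<and> s2 y div k = s2 x0 div k}" .
    moreover have "s2 x0 div k < l" using inv_lt[OF t2 st2] x0 k div_less_l by blast
    ultimately show "B \<in> part_act t2 (alpha0 k l)" using mem_part_act[OF k t2 st2 ts2] by blast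
  qed
  show ?thesis
    using sub[OF t st ts t' st' ts' R] sub[OF t' st' ts' t st ts] R by (metis subset_antisym)
qed

lemma conj_transpose:
  assumes "inj g"
  shows "g \<circ> Transposition.transpose x y = Transposition.transpose (g x) (g y) \<circ> g"
  using assms by (auto simp: fun_eq_iff transpose_def inj_eq)

lemma perm_exists:
  assumes S: "finite S" and inj: "inj_on \<phi> D" and DS: "D \<subseteq> S" and iS: "\<phi> ` D \<subseteq> S"
  shows "\<exists>p. p permutes S \<and> (\<forall>x\<in>D. p x = \<phi> x)"
proof -
  have fD: "finite D" using S DS finite_subset by blast
  have "card (S - D) = card (S - \<phi> ` D)"
    using card_Diff_subset[OF fD DS] card_Diff_subset[OF finite_imageI[OF fD] iS] card_image[OF inj] by simp
  then obtain h where h: "bij_betw h (S - D) (S - \<phi> ` D)"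
    using finite_same_card_bij S by (meson finite_Diff)
  define p where "p = (\<lambda>x. if x \<in> D then \<phi> x else if x \<in> S then h x else x)"
  have b1: "bij_betw p D (\<phi> ` D)" unfolding p_def bij_betw_def using inj by (auto simp: inj_on_def)
  have b2: "bij_betw p (S - D) (S - \<phi> ` D)" using h unfolding p_def
    by (rule bij_betw_cong[THEN iffD1, rotated]) auto
  have "bij_betw p (D \<union> (S - D)) (\<phi> ` D \<union> (S - \<phi> ` D))"
    by (rule bij_betw_combine[OF b1 b2]) auto
  moreover have "D \<union> (S - D) = S" "\<phi> ` D \<union> (S - \<phi> ` D) = S" using DS iS by auto
  ultimately have "bij_betw p S S" by simp
  then have "p permutes S" by (rule bij_imp_permutes) (use DS in \<open>auto simp: p_def\<close>)
  then show ?thesis unfolding p_def by auto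
qed

lemma ext_perm:
  assumes k: "0 < k" and \<sigma>: "\<sigma> permutes {0..<l}" and \<tau>: "\<And>c. c < l \<Longrightarrow> \<tau> c permutes {0..<k}"
  defines "g \<equiv> (\<lambda>x. if x < k*l then \<sigma> (x div k) * k + \<tau> (x div k) (x mod k) else x)"
  shows "g permutes {0..<k*l}" "part_act g (alpha0 k l) = alpha0 k l"
    "\<And>c u. c < l \<Longrightarrow> u < k \<Longrightarrow> g (c*k+u) = \<sigma> c * k + \<tau> c u"
proof -
  have \<sigma>l: "\<And>c. c < l \<Longrightarrow> \<sigma> c < l" using perm_lt[OF \<sigma>] by simp
  have \<tau>k: "\<And>c u. c < l \<Longrightarrow> u < k \<Longrightarrow> \<tau> c u < k" using perm_lt[OF \<tau>] by simp
  have gval: "g (c*k+u) = \<sigma> c * k + \<tau> c u" if "c < l" "u < k" for c u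
  proof -
    have "c*k+u < (c+1)*k" using that by simp
    also have "\<dots> \<le> l*k" using that by (intro mult_right_mono) auto
    finally have "c*k+u < k*l" by (simp add: mult.commute)
    moreover have "(c*k+u) div k = c" "(c*k+u) mod k = u" using that k by auto
    ultimately show ?thesis unfolding g_def by simp
  qed
  then show "\<And>c u. c < l \<Longrightarrow> u < k \<Longrightarrow> g (c*k+u) = \<sigma> c * k + \<tau> c u" .
  have gdecomp: "x < k*l \<Longrightarrow> x = (x div k)*k + x mod k \<and> x div k < l \<and> x mod k < k" for x
    using k div_less_l by (auto simp: mult.commute)
  have img: "g ` {0..<k*l} \<subseteq> {0..<k*l}"
  proof
    fix y assume "y \<in> g ` {0..<k*l}"
    then obtain x where x: "x < k*l" "y = g x" by auto
    then have "y = \<sigma> (x div k) * k + \<tau> (x div k) (x mod k)" unfolding g_def by simp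
    moreover have "\<sigma> (x div k) < l" "\<tau> (x div k) (x mod k) < k" using gdecomp[OF x(1)] \<sigma>l \<tau>k by auto
    ultimately have "y div k < l" using k by simp
    then show "y \<in> {0..<k*l}" using k div_less_l by simp
  qed
  have dm: "(a*k+b) div k = a \<and> (a*k+b) mod k = b" if "b < k" for a b using that by simp
  have inj: "inj_on g {0..<k*l}"
  proof (rule inj_onI)
    fix x y assume x: "x \<in> {0..<k*l}" and y: "y \<in> {0..<k*l}" and e: "g x = g y"
    let ?cx = "x div k" and ?cy = "y div k"
    have bx: "?cx < l" "x mod k < k" and yb: "?cy < l" "y mod k < k" using gdecomp x y by auto
    have "\<sigma> ?cx * k + \<tau> ?cx (x mod k) = \<sigma> ?cy * k + \<tau> ?cy (y mod k)" using e x y unfolding g_def by simp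
    moreover have "\<tau> ?cx (x mod k) < k" "\<tau> ?cy (y mod k) < k" using bx yb \<tau>k by auto
    ultimately have e1: "\<sigma> ?cx = \<sigma> ?cy" and e2: "\<tau> ?cx (x mod k) = \<tau> ?cy (y mod k)"
      using dm[of "\<tau> ?cx (x mod k)" "\<sigma> ?cx"] dm[of "\<tau> ?cy (y mod k)" "\<sigma> ?cy"] by metis+
    have "?cx = ?cy" using e1 permutes_inj[OF \<sigma>] by (simp add: inj_eq)
    moreover then have "x mod k = y mod k" using e2 permutes_inj[OF \<tau>[OF bx(1)]] by (simp add: inj_eq)
    ultimately show "x = y" by (metis div_mult_mod_eq)
  qed
  have "bij_betw g {0..<k*l} {0..<k*l}"
    unfolding bij_betw_def using inj endo_inj_surj[OF _ img inj] by simp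
  then show gp: "g permutes {0..<k*l}" by (rule bij_imp_permutes) (auto simp: g_def)
  have injg: "inj g" using gp permutes_inj by blast
  have bimg: "g ` blk k c = blk k (\<sigma> c)" if c: "c < l" for c
  proof -
    have "g ` blk k c \<subseteq> blk k (\<sigma> c)"
    proof
      fix y assume "y \<in> g ` blk k c"
      then obtain u where u: "u < k" "y = g (c*k+u)" unfolding blk_def
        by (auto, metis add_less_cancel_left le_iff_add)
      then show "y \<in> blk k (\<sigma> c)" using gval[OF c u(1)] \<tau>k[OF c u(1)] unfolding blk_def by simp
    qed
    moreover have "card (g ` blk k c) = card (blk k (\<sigma> c))"
      using card_image[OF inj_on_subset[OF injg]] by (simp add: blk_def)
    ultimately show ?thesis by (simp add: card_subset_eq blk_def)
  qed
  have "part_act g (alpha0 k l) = blk k ` (\<sigma> ` {0..<l})"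
    unfolding part_act_def alpha0_def image_image using bimg by (auto simp: image_iff)
  then show "part_act g (alpha0 k l) = alpha0 k l" using permutes_image[OF \<sigma>] by (simp add: alpha0_def)
qed

lemma G_perm: "G = Alt n \<or> G = Sym n \<Longrightarrow> g \<in> G \<Longrightarrow> g permutes {0..<n}"
  unfolding Alt_def Sym_def by auto

lemma orbit_lower:
  assumes G: "G = Alt (k*l) \<or> G = Sym (k*l)" and g: "g permutes {0..<k*l}" and ga: "part_act g (alpha0 k l) = alpha0 k l"
    and \<tau>: "\<tau> permutes {0..<k*l}" "\<not> evenperm \<tau>" "part_act \<tau> (alpha0 k l) = alpha0 k l" "part_act \<tau> \<gamma> = \<gamma>"
  shows "part_act g \<gamma> \<in> stab_orbit G part_act (alpha0 k l) \<gamma>"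
proof (cases "G = Sym (k*l) \<or> evenperm g")
  case True
  then have "g \<in> G" using G g unfolding Alt_def Sym_def by auto
  then show ?thesis using ga unfolding stab_orbit_def by blast
next
  case False
  have p1: "permutation g" "permutation \<tau>" using g \<tau>(1) permutes_imp_permutation by blast+
  have "evenperm (g \<circ> \<tau>)" using evenperm_comp[OF p1] False \<tau>(2) by simp
  moreover have "g \<circ> \<tau> permutes {0..<k*l}" using permutes_compose[OF \<tau>(1) g] .
  ultimately have "g \<circ> \<tau> \<in> G" using G False unfolding Alt_def Sym_def by auto
  moreover have "part_act (g \<circ> \<tau>) (alpha0 k l) = alpha0 k l" "part_act (g \<circ> \<tau>) \<gamma> = part_act g \<gamma>"
    using ga \<tau> by (simp_all add: part_act_comp)
  ultimately show ?thesis unfolding stab_orbit_def by (metis (mono_tags, lifting) mem_Collect_eq)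
qed

lemma orbit_upper:
  assumes G: "G = Alt n \<or> G = Sym n" and x: "x \<in> stab_orbit G part_act \<alpha> \<beta>"
  shows "\<exists>g. g permutes {0..<n} \<and> part_act g \<alpha> = \<alpha> \<and> x = part_act g \<beta>"
  using x G_perm[OF G] unfolding stab_orbit_def by blast

lemma blocks_pres:
  assumes k: "0 < k" and g: "g permutes {0..<k*l}" and ga: "part_act g (alpha0 k l) = alpha0 k l"
    and x: "x < k*l" and y: "y < k*l"
  shows "(g x div k = g y div k) \<longleftrightarrow> (x div k = y div k)"
proof -
  have i1: "\<And>x. inv g (g x) = x" "\<And>x. g (inv g x) = x" using permutes_inverses[OF g] by auto
  have idp: "id permutes {0..<k*l}" by (simp add: permutes_id)
  have "(inv g (g x) div k = inv g (g y) div k) \<longleftrightarrow> (id (g x) div k = id (g y) div k)"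
    by (rule same_block[OF k g i1 idp _ _ _ _ _]) (use ga x y perm_lt[OF g] in \<open>auto simp: part_act_id\<close>)
  then show ?thesis using i1 by simp
qed

definition I2 :: "nat \<Rightarrow> (nat \<times> nat) set" where "I2 l = {(i,j). i < j \<and> j < l}"
definition I3 :: "nat \<Rightarrow> (nat \<times> nat \<times> nat) set" where "I3 l = {(i,j,h). i < j \<and> j < h \<and> h < l}"

lemma I2_Suc: "I2 (Suc l) = I2 l \<union> (\<lambda>i. (i,l)) ` {0..<l}"
  unfolding I2_def by auto
lemma I3_Suc: "I3 (Suc l) = I3 l \<union> (\<lambda>(i,j). (i,j,l)) ` I2 l"
  unfolding I3_def I2_def by (fastforce simp: less_Suc_eq image_iff)
lemma I2_fin: "finite (I2 l)"
  by (rule finite_subset[of _ "{0..<l} \<times> {0..<l}"]) (auto simp: I2_def)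
lemma I3_fin: "finite (I3 l)"
  by (rule finite_subset[of _ "{0..<l} \<times> {0..<l} \<times> {0..<l}"]) (auto simp: I3_def)

lemma card_I2: "2 * card (I2 l) = l * (l - 1)"
proof (induction l)
  case 0 then show ?case by (simp add: I2_def)
next
  case (Suc l)
  have d: "I2 l \<inter> (\<lambda>i. (i,l)) ` {0..<l} = {}" by (auto simp: I2_def)
  have "card (I2 (Suc l)) = card (I2 l) + l"
    unfolding I2_Suc by (subst card_Un_disjoint) (auto simp: I2_fin d card_image inj_on_def)
  then show ?case using Suc by (cases l) (auto simp: algebra_simps)
qed

lemma card_I3: "6 * card (I3 l) = l * (l - 1) * (l - 2)"
proof (induction l)
  case 0 have "I3 0 = {}" by (auto simp: I3_def)
  then show ?case by simp
next
  case (Suc l)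
  have d: "I3 l \<inter> (\<lambda>(i,j). (i,j,l)) ` I2 l = {}" by (auto simp: I3_def)
  have inj: "inj_on (\<lambda>(i,j). (i,j,l)) (I2 l)" by (auto simp: inj_on_def)
  have "card (I3 (Suc l)) = card (I3 l) + card (I2 l)"
    unfolding I3_Suc by (subst card_Un_disjoint) (auto simp: I3_fin I2_fin d card_image[OF inj])
  then have "6 * card (I3 (Suc l)) = l * (l - 1) * (l - 2) + 3 * (l * (l - 1))"
    using Suc card_I2[of l] by simp
  also have "\<dots> = Suc l * (Suc l - 1) * (Suc l - 2)"
    by (cases l; cases "l - 1") (auto simp: algebra_simps)
  finally show ?case .
qed

abbreviation tp :: "nat \<Rightarrow> nat \<Rightarrow> nat \<Rightarrow> nat" where "tp \<equiv> Transposition.transpose"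

lemma tp_perm: "a < n \<Longrightarrow> b < n \<Longrightarrow> tp a b permutes {0..<n}"
  by (rule permutes_swap_id) auto

lemma conj_act:
  assumes g: "g permutes S" and ga: "part_act g A = A"
  shows "part_act g (part_act (tp a b) A) = part_act (tp (g a) (g b)) A"
proof -
  have "inj g" using g permutes_inj by blast
  then have "g \<circ> tp a b = tp (g a) (g b) \<circ> g" by (rule conj_transpose)
  then have "part_act (g \<circ> tp a b) A = part_act (tp (g a) (g b) \<circ> g) A" by simp
  then show ?thesis unfolding part_act_comp ga .
qed

lemma O1_upper:
  assumes G: "G = Alt (k*l) \<or> G = Sym (k*l)" and k: "0 < k" and l: "2 \<le> l"
  shows "stab_orbit G part_act (alpha0 k l) (part_act (tp 0 k) (alpha0 k l)) \<subseteq>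
    (\<lambda>((i,j),u,v). part_act (tp (i*k+u) (j*k+v)) (alpha0 k l)) ` (I2 l \<times> {0..<k} \<times> {0..<k})"
proof
  fix x assume "x \<in> stab_orbit G part_act (alpha0 k l) (part_act (tp 0 k) (alpha0 k l))"
  then obtain g where g: "g permutes {0..<k*l}" "part_act g (alpha0 k l) = alpha0 k l"
    and x: "x = part_act g (part_act (tp 0 k) (alpha0 k l))" using orbit_upper[OF G] by blast
  have x2: "x = part_act (tp (g 0) (g k)) (alpha0 k l)" using conj_act[OF g] x by simp
  have n0: "0 < k*l" "k < k*l" using k l by auto
  let ?a = "g 0" and ?b = "g k"
  have ab: "?a < k*l" "?b < k*l" using n0 perm_lt[OF g(1)] by auto
  have "?a div k \<noteq> ?b div k" using blocks_pres[OF k g(1) g(2) n0] k by simp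
  moreover have dl: "?a div k < l" "?b div k < l" using ab div_less_l k by auto
  moreover have dm: "?a = ?a div k * k + ?a mod k" "?b = ?b div k * k + ?b mod k" by simp_all
  moreover have mk: "?a mod k < k" "?b mod k < k" using k by auto
  ultimately consider "?a div k < ?b div k" | "?b div k < ?a div k" by linarith
  then show "x \<in> (\<lambda>((i,j),u,v). part_act (tp (i*k+u) (j*k+v)) (alpha0 k l)) ` (I2 l \<times> {0..<k} \<times> {0..<k})"
  proof cases
    case 1
    then show ?thesis using x2 dl dm mk
      by (intro image_eqI[where x="((?a div k, ?b div k), ?a mod k, ?b mod k)"]) (auto simp: I2_def)
  next
    case 2
    then show ?thesis using x2 dl dm mk transpose_commute[of ?a ?b]
      by (intro image_eqI[where x="((?b div k, ?a div k), ?b mod k, ?a mod k)"]) (auto simp: I2_def)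
  qed
qed

definition prt :: "nat \<Rightarrow> nat" where "prt x = 2 * (x div 2) + (1 - x mod 2)"

lemma prt_props: "prt x div 2 = x div 2" "prt x \<noteq> x" "z div 2 = x div 2 \<Longrightarrow> z = x \<or> z = prt x"
  "prt (prt x) = x"
proof -
  have m: "x mod 2 = 0 \<or> x mod 2 = 1" "z mod 2 = 0 \<or> z mod 2 = 1" by auto
  have e: "x = 2*(x div 2) + x mod 2" "z = 2*(z div 2) + z mod 2" by auto
  show "prt x div 2 = x div 2" unfolding prt_def using m by auto
  show "prt x \<noteq> x" unfolding prt_def using m e by linarith
  show "z div 2 = x div 2 \<Longrightarrow> z = x \<or> z = prt x" unfolding prt_def using m e by linarith
  have pm: "prt x mod 2 = 1 - x mod 2" unfolding prt_def using m by auto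
  have pd: "prt x div 2 = x div 2" unfolding prt_def using m by auto
  show "prt (prt x) = x" unfolding prt_def[of "prt x"] pm pd using m e by linarith
qed

lemma swap_pair2:
  assumes ab: "a < 2*l" "b < 2*l" "a div 2 \<noteq> b div 2"
  shows "part_act (tp a b) (alpha0 2 l) = part_act (tp (prt a) (prt b)) (alpha0 2 l)"
proof -
  have lt: "prt a < 2*l" "prt b < 2*l" using ab prt_props(1) div_less_l[of 2] by (metis zero_less_numeral)+
  let ?A = "a div 2" and ?B = "b div 2"
  define sw where "sw c = (if c = ?A then ?B else if c = ?B then ?A else c)" for c
  have key: "tp (prt a) (prt b) z div 2 = sw (tp a b z div 2)" for z
  proof -
    have d: "a \<noteq> b" "a \<noteq> prt b" "prt a \<noteq> b" "prt a \<noteq> prt b" "a \<noteq> prt a" "b \<noteq> prt b"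
      using ab prt_props(1,2) by metis+
    consider "z = a" | "z = prt a" | "z = b" | "z = prt b" | "z \<notin> {a, prt a, b, prt b}" by blast
    then show ?thesis
    proof cases
      case 5
      then have "z div 2 \<noteq> ?A" "z div 2 \<noteq> ?B" using prt_props(3) by blast+
      then show ?thesis using 5 unfolding sw_def by (auto simp: transpose_def)
    qed (use d prt_props(1,2) ab(3) in \<open>auto simp: transpose_def sw_def\<close>)
  qed
  have swi: "sw c = sw d \<longleftrightarrow> c = d" for c d unfolding sw_def by auto
  have p1: "tp a b permutes {0..<2*l}" "tp (prt a) (prt b) permutes {0..<2*l}" using ab lt tp_perm by auto
  show ?thesis
  proof (rule conv_block[where s="tp a b" and s'="tp (prt a) (prt b)", OF _ p1(1) _ _ p1(2)])
    fix x y show "(tp a b x div 2 = tp a b y div 2) = (tp (prt a) (prt b) x div 2 = tp (prt a) (prt b) y div 2)"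
      unfolding key swi ..
  qed simp_all
qed

lemma O1_upper2:
  assumes G: "G = Alt (2*l) \<or> G = Sym (2*l)" and l: "2 \<le> l"
  shows "stab_orbit G part_act (alpha0 2 l) (part_act (tp 0 2) (alpha0 2 l)) \<subseteq>
    (\<lambda>((i,j),v). part_act (tp (i*2) (j*2+v)) (alpha0 2 l)) ` (I2 l \<times> {0..<2})"
proof
  fix x assume "x \<in> stab_orbit G part_act (alpha0 2 l) (part_act (tp 0 2) (alpha0 2 l))"
  then have "x \<in> (\<lambda>((i,j),u,v). part_act (tp (i*2+u) (j*2+v)) (alpha0 2 l)) ` (I2 l \<times> {0..<2} \<times> {0..<2})"
    using O1_upper[OF G _ l] by auto
  then obtain i j u v where ij: "(i,j) \<in> I2 l" "u < 2" "v < 2" and x: "x = part_act (tp (i*2+u) (j*2+v)) (alpha0 2 l)"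
    by auto
  show "x \<in> (\<lambda>((i,j),v). part_act (tp (i*2) (j*2+v)) (alpha0 2 l)) ` (I2 l \<times> {0..<2})"
  proof (cases "u = 0")
    case True then show ?thesis using ij x by force
  next
    case False
    then have u: "u = 1" using ij by simp
    have lt: "i*2+u < 2*l" "j*2+v < 2*l" "(i*2+u) div 2 \<noteq> (j*2+v) div 2" using ij by (auto simp: I2_def)
    have "x = part_act (tp (prt (i*2+u)) (prt (j*2+v))) (alpha0 2 l)" using swap_pair2[OF lt] x by simp
    moreover have hh: "(i*2+u) div 2 = i" "(i*2+u) mod 2 = 1" "(j*2+v) div 2 = j" "(j*2+v) mod 2 = v" using u ij(3) by (auto simp: mod_Suc)
    have "prt (i*2+u) = i*2" unfolding prt_def hh by simp
    moreover have "prt (j*2+v) = j*2 + (1-v)" using ij(3) by (cases "v = 0") (auto simp: prt_def)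
    ultimately show ?thesis using ij by (intro image_eqI[where x="((i,j),1-v)"]) auto
  qed
qed

lemma tp2_perm: "a < n \<Longrightarrow> b < n \<Longrightarrow> c < n \<Longrightarrow> d < n \<Longrightarrow> tp a b \<circ> tp c d permutes {0..<n}"
  using tp_perm permutes_compose by blast

lemma R2:
  assumes k: "0 < k" and pts: "a < k*l" "b < k*l" "c < k*l" "d < k*l" "a' < k*l" "b' < k*l" "c' < k*l" "d' < k*l"
    and eq: "part_act (tp a b \<circ> tp c d) (alpha0 k l) = part_act (tp a' b' \<circ> tp c' d') (alpha0 k l)"
    and x: "x < k*l" and y: "y < k*l"
  shows "(tp c d (tp a b x) div k = tp c d (tp a b y) div k) \<longleftrightarrow> (tp c' d' (tp a' b' x) div k = tp c' d' (tp a' b' y) div k)"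
  using same_block[OF k tp2_perm[OF pts(1-4)] _ _ tp2_perm[OF pts(5-8)] _ _ eq x y, where s="tp c d \<circ> tp a b" and s'="tp c' d' \<circ> tp a' b'"]
  by simp

lemma fix_within:
  assumes k: "0 < k" and ab: "a < k*l" "b < k*l" "a div k = b div k"
  shows "part_act (tp a b) (alpha0 k l) = alpha0 k l"
proof -
  have "part_act (tp a b) (alpha0 k l) = part_act id (alpha0 k l)"
  proof (rule conv_block[where s="tp a b" and s'=id, OF k tp_perm[OF ab(1,2)] _ _ permutes_id])
    fix x y :: nat
    have "tp a b z div k = z div k" for z using ab(3) by (auto simp: transpose_def)
    then show "(tp a b x div k = tp a b y div k) = (id x div k = id y div k)" by simp
  qed simp_all
  then show ?thesis by (simp add: part_act_id)
qed

lemma tp_commute: "a \<noteq> c \<Longrightarrow> a \<noteq> d \<Longrightarrow> b \<noteq> c \<Longrightarrow> b \<noteq> d \<Longrightarrow> tp a b \<circ> tp c d = tp c d \<circ> tp a b"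
  by (auto simp: fun_eq_iff transpose_def)

lemma conj_act2:
  assumes g: "g permutes S" and ga: "part_act g A = A"
  shows "part_act g (part_act (tp a b \<circ> tp c d) A) = part_act (tp (g a) (g b) \<circ> tp (g c) (g d)) A"
proof -
  have "inj g" using g permutes_inj by blast
  then have c: "\<And>x y. g \<circ> tp x y = tp (g x) (g y) \<circ> g" by (rule conj_transpose)
  have "g \<circ> (tp a b \<circ> tp c d) = (g \<circ> tp a b) \<circ> tp c d" by (simp add: comp_assoc)
  also have "\<dots> = tp (g a) (g b) \<circ> (g \<circ> tp c d)" by (simp only: c comp_assoc)
  also have "\<dots> = (tp (g a) (g b) \<circ> tp (g c) (g d)) \<circ> g" by (simp only: c comp_assoc)
  finally have "g \<circ> (tp a b \<circ> tp c d) = (tp (g a) (g b) \<circ> tp (g c) (g d)) \<circ> g" .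
  then have "part_act (g \<circ> (tp a b \<circ> tp c d)) A = part_act ((tp (g a) (g b) \<circ> tp (g c) (g d)) \<circ> g) A" by simp
  then show ?thesis unfolding part_act_comp ga .
qed

lemma two_point_perm:
  assumes "x0 \<noteq> x1" "y0 \<noteq> y1" "x0 < m" "x1 < m" "y0 < m" "y1 < (m::nat)"
  shows "\<exists>p. p permutes {0..<m} \<and> p x0 = y0 \<and> p x1 = y1"
proof -
  have "\<exists>p. p permutes {0..<m} \<and> (\<forall>x\<in>{x0,x1}. p x = (if x = x0 then y0 else y1))"
    by (rule perm_exists) (use assms in \<open>auto simp: inj_on_def\<close>)
  then show ?thesis using assms(1) by (metis insertI1 insertI2 singletonI)
qed

lemma make_g:
  assumes k: "0 < k" and cs: "c0 \<noteq> c1" "d0 \<noteq> d1" "c0 < l" "c1 < l" "d0 < l" "d1 < l"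
    and u: "u0 \<noteq> u1" "v0 \<noteq> v1" "u0 < k" "u1 < k" "v0 < k" "v1 < k"
    and w: "w0 \<noteq> w1" "z0 \<noteq> z1" "w0 < k" "w1 < k" "z0 < k" "z1 < k"
  shows "\<exists>g. g permutes {0..<k*l} \<and> part_act g (alpha0 k l) = alpha0 k l \<and>
    g (c0*k+u0) = d0*k+v0 \<and> g (c0*k+u1) = d0*k+v1 \<and> g (c1*k+w0) = d1*k+z0 \<and> g (c1*k+w1) = d1*k+z1"
proof -
  obtain \<sigma> where \<sigma>: "\<sigma> permutes {0..<l}" "\<sigma> c0 = d0" "\<sigma> c1 = d1" using two_point_perm[OF cs] by blast
  obtain p0 where p0: "p0 permutes {0..<k}" "p0 u0 = v0" "p0 u1 = v1" using two_point_perm[OF u] by blast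
  obtain p1 where p1: "p1 permutes {0..<k}" "p1 w0 = z0" "p1 w1 = z1" using two_point_perm[OF w] by blast
  define \<tau> where "\<tau> c = (if c = c0 then p0 else if c = c1 then p1 else id)" for c
  have \<tau>p: "\<And>c. c < l \<Longrightarrow> \<tau> c permutes {0..<k}" unfolding \<tau>_def using p0 p1 permutes_id by auto
  have E: "(\<lambda>x. if x < k*l then \<sigma> (x div k) * k + \<tau> (x div k) (x mod k) else x) permutes {0..<k*l}"
    "part_act (\<lambda>x. if x < k*l then \<sigma> (x div k) * k + \<tau> (x div k) (x mod k) else x) (alpha0 k l) = alpha0 k l"
    "\<And>c u. c < l \<Longrightarrow> u < k \<Longrightarrow> (\<lambda>x. if x < k*l then \<sigma> (x div k) * k + \<tau> (x div k) (x mod k) else x) (c*k+u) = \<sigma> c * k + \<tau> c u"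
    using ext_perm[of k \<sigma> l \<tau>] k \<sigma>(1) \<tau>p by auto
  define g where "g = (\<lambda>x. if x < k*l then \<sigma> (x div k) * k + \<tau> (x div k) (x mod k) else x)"
  have g1: "g permutes {0..<k*l}" "part_act g (alpha0 k l) = alpha0 k l" using E(1,2) unfolding g_def by auto
  have g3: "g (c*k+uu) = \<sigma> c * k + \<tau> c uu" if "c < l" "uu < k" for c uu using E(3)[OF that] unfolding g_def by simp
  show ?thesis
    by (rule exI[of _ g]) (use cs u w \<sigma> p0 p1 g1 in \<open>simp add: g3 \<tau>_def\<close>)
qed

definition FA :: "nat \<Rightarrow> nat \<Rightarrow> (nat \<times> nat) \<times> nat \<times> (nat \<times> nat) \<Rightarrow> nat set set" where
  "FA k l = (\<lambda>((i,j),r,(s,s')). part_act (tp (i*k) (j*k+s) \<circ> tp (i*k+r) (j*k+s')) (alpha0 k l))"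
definition IA :: "nat \<Rightarrow> nat \<Rightarrow> ((nat \<times> nat) \<times> nat \<times> (nat \<times> nat)) set" where
  "IA k l = I2 l \<times> {1..<k} \<times> I2 k"

definition dA :: "nat \<Rightarrow> nat \<Rightarrow> nat \<Rightarrow> nat \<Rightarrow> nat \<Rightarrow> nat \<Rightarrow> nat \<Rightarrow> nat" where
  "dA k i j r s s' x = (if x = i*k \<or> x = i*k+r then j else if x = j*k+s \<or> x = j*k+s' then i else x div k)"

lemma divk: "u < k \<Longrightarrow> (c*k+u) div k = (c::nat)"
  by simp

lemma dA_eval:
  assumes k: "0 < k" and p: "i < j" "0 < r" "r < k" "s < s'" "s' < k"
  shows "tp (i*k+r) (j*k+s') (tp (i*k) (j*k+s) x) div k = dA k i j r s s' x"
proof -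
  have dv: "(i*k) div k = i" "(i*k+r) div k = i" "(j*k+s) div k = j" "(j*k+s') div k = j" using k p by auto
  have ne: "i*k \<noteq> j*k+s" "i*k \<noteq> j*k+s'" "i*k+r \<noteq> j*k+s" "i*k+r \<noteq> j*k+s'"
    using dv p by (metis less_irrefl)+
  have ne2: "i*k \<noteq> i*k+r" "j*k+s \<noteq> j*k+s'" using p by auto
  show ?thesis unfolding dA_def using ne ne2 dv by (auto simp: transpose_def)
qed

lemma FA_rel:
  assumes k: "0 < k" and p: "((i,j),r,(s,s')) \<in> IA k l" and q: "((i2,j2),r2,(s2,s2')) \<in> IA k l"
    and eq: "FA k l ((i,j),r,(s,s')) = FA k l ((i2,j2),r2,(s2,s2'))"
    and x: "x < k*l" and y: "y < k*l"
  shows "(dA k i j r s s' x = dA k i j r s s' y) \<longleftrightarrow> (dA k i2 j2 r2 s2 s2' x = dA k i2 j2 r2 s2 s2' y)"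
proof -
  have pp: "i < j" "j < l" "0 < r" "r < k" "s < s'" "s' < k" using p by (auto simp: IA_def I2_def)
  have qq: "i2 < j2" "j2 < l" "0 < r2" "r2 < k" "s2 < s2'" "s2' < k" using q by (auto simp: IA_def I2_def)
  have lt: "c*k+u < k*l" if "c < l" "u < k" for c u
  proof -
    have "c*k+u < (c+1)*k" using that by simp
    also have "\<dots> \<le> l*k" using that by (intro mult_right_mono) auto
    finally show ?thesis by (simp add: mult.commute)
  qed
  have pts: "i*k < k*l" "j*k+s < k*l" "i*k+r < k*l" "j*k+s' < k*l" "i2*k < k*l" "j2*k+s2 < k*l" "i2*k+r2 < k*l" "j2*k+s2' < k*l"
    using lt[of i 0] lt[of j s] lt[of i r] lt[of j s'] lt[of i2 0] lt[of j2 s2] lt[of i2 r2] lt[of j2 s2'] pp qq k by auto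
  have "(tp (i*k+r) (j*k+s') (tp (i*k) (j*k+s) x) div k = tp (i*k+r) (j*k+s') (tp (i*k) (j*k+s) y) div k) \<longleftrightarrow>
        (tp (i2*k+r2) (j2*k+s2') (tp (i2*k) (j2*k+s2) x) div k = tp (i2*k+r2) (j2*k+s2') (tp (i2*k) (j2*k+s2) y) div k)"
    by (rule R2[OF k pts _ x y]) (use eq in \<open>simp add: FA_def\<close>)
  then show ?thesis using dA_eval[OF k] pp qq by simp
qed

lemma lt_blk: "c < l \<Longrightarrow> u < k \<Longrightarrow> c*k+u < k*(l::nat)"
proof -
  assume that: "c < l" "u < k"
  have "c*k+u < (c+1)*k" using that by simp
  also have "\<dots> \<le> l*k" using that by (intro mult_right_mono) auto
  finally show ?thesis by (simp add: mult.commute)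
qed

lemma A_blocks:
  assumes k: "4 \<le> k" and pp: "i < j" "j < l" "0 < r" "r < k" "s < s'" "s' < k"
    and qq: "i2 < j2" "j2 < l" "0 < r2" "r2 < k" "s2 < s2'" "s2' < k"
    and R: "\<And>x y. x < k*l \<Longrightarrow> y < k*l \<Longrightarrow> (dA k i j r s s' x = dA k i j r s s' y) \<longleftrightarrow> (dA k i2 j2 r2 s2 s2' x = dA k i2 j2 r2 s2 s2' y)"
  shows "i \<in> {i2,j2} \<and> j \<in> {i2,j2}"
proof (intro conjI)
  have k0: "0 < k" using k by simp
  have dq: "dA k i2 j2 r2 s2 s2' (c*k+u) = c" if "c \<notin> {i2,j2}" "u < k" for c u
  proof -
    have "(c*k+u) div k = c" using that k0 by simp
    moreover have "(i2*k) div k = i2" "(i2*k+r2) div k = i2" "(j2*k+s2) div k = j2" "(j2*k+s2') div k = j2"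
      using k0 qq by auto
    ultimately show ?thesis unfolding dA_def using that by (metis insert_iff)
  qed
  show "i \<in> {i2,j2}"
  proof (rule ccontr)
    assume ni: "i \<notin> {i2,j2}"
    define w where "w = (if r = 1 then 2 else 1::nat)"
    have w: "w < k" "w \<noteq> 0" "w \<noteq> r" using k unfolding w_def by auto
    have x: "i*k+0 < k*l" "i*k+w < k*l" using lt_blk pp w k by auto
    have "dA k i j r s s' (i*k+0) = j" unfolding dA_def by simp
    moreover have "dA k i j r s s' (i*k+w) = i"
    proof -
      have "(j*k+s) div k = j" "(j*k+s') div k = j" "(i*k+w) div k = i" using pp w k0 by auto
      then have "i*k+w \<noteq> j*k+s" "i*k+w \<noteq> j*k+s'" using pp by (metis less_irrefl)+
      then show ?thesis unfolding dA_def using w k0 by auto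
    qed
    moreover have "dA k i2 j2 r2 s2 s2' (i*k+0) = i" "dA k i2 j2 r2 s2 s2' (i*k+w) = i" using dq[of i 0] dq[of i w] ni w k0 by auto
    ultimately show False using R[OF x] pp by simp
  qed
  show "j \<in> {i2,j2}"
  proof (rule ccontr)
    assume nj: "j \<notin> {i2,j2}"
    define w where "w = (if s \<noteq> 0 \<and> s' \<noteq> 0 then 0 else if s \<noteq> 1 \<and> s' \<noteq> 1 then 1 else 2::nat)"
    have w: "w < k" "w \<noteq> s" "w \<noteq> s'" using k pp unfolding w_def by auto
    have x: "j*k+s < k*l" "j*k+w < k*l" using lt_blk pp w k by auto
    have dv: "(i*k) div k = i" "(i*k+r) div k = i" "(j*k+w) div k = j" "(j*k+s) div k = j" using pp w k0 by auto
    then have ne: "j*k+s \<noteq> i*k" "j*k+s \<noteq> i*k+r" "j*k+w \<noteq> i*k" "j*k+w \<noteq> i*k+r" using pp by (metis less_irrefl)+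
    have "dA k i j r s s' (j*k+s) = i" unfolding dA_def using ne by auto
    moreover have "dA k i j r s s' (j*k+w) = j" unfolding dA_def using ne w dv by auto
    moreover have "dA k i2 j2 r2 s2 s2' (j*k+s) = j" "dA k i2 j2 r2 s2 s2' (j*k+w) = j" using dq[of j s] dq[of j w] nj w pp by auto
    ultimately show False using R[OF x] pp by simp
  qed
qed



lemma eq_blk: "u < k \<Longrightarrow> v < k \<Longrightarrow> (c*k+u = d*k+(v::nat)) \<longleftrightarrow> c = d \<and> u = v"
proof
  assume uv: "u < k" "v < k" and e: "c*k+u = d*k+v"
  have "(c*k+u) div k = c" "(d*k+v) div k = d" "(c*k+u) mod k = u" "(d*k+v) mod k = v" using uv by auto
  then show "c = d \<and> u = v" using e by metis
qed auto

lemma dA_blk: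
  assumes "u < k" "r < k" "s < k" "s' < k"
  shows "dA k i j r s s' (c*k+u) = (if c = i \<and> (u = 0 \<or> u = r) then j else if c = j \<and> (u = s \<or> u = s') then i else c)"
proof -
  have k0: "0 < k" using assms by simp
  have "i*k = i*k+0" by simp
  then show ?thesis unfolding dA_def using eq_blk[OF assms(1)] assms k0
    by (smt (verit) add_0_right divk)
qed

lemma A_inj:
  assumes k: "4 \<le> k"
  shows "inj_on (FA k l) (IA k l)"
proof (rule inj_onI)
  fix p q assume p: "p \<in> IA k l" and q: "q \<in> IA k l" and eq: "FA k l p = FA k l q"
  obtain i j r s s' where p0: "p = ((i,j),r,(s,s'))" by (metis prod.exhaust)
  obtain i2 j2 r2 s2 s2' where q0: "q = ((i2,j2),r2,(s2,s2'))" by (metis prod.exhaust)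
  have k0: "0 < k" using k by simp
  have pp: "i < j" "j < l" "0 < r" "r < k" "s < s'" "s' < k" using p p0 by (auto simp: IA_def I2_def)
  have qq: "i2 < j2" "j2 < l" "0 < r2" "r2 < k" "s2 < s2'" "s2' < k" using q q0 by (auto simp: IA_def I2_def)
  have R: "\<And>x y. x < k*l \<Longrightarrow> y < k*l \<Longrightarrow> (dA k i j r s s' x = dA k i j r s s' y) \<longleftrightarrow> (dA k i2 j2 r2 s2 s2' x = dA k i2 j2 r2 s2 s2' y)"
    using FA_rel[OF k0] p q eq p0 q0 by blast
  have b1: "i \<in> {i2,j2} \<and> j \<in> {i2,j2}" by (rule A_blocks[OF k pp qq R])
  have b2: "i2 \<in> {i,j} \<and> j2 \<in> {i,j}" by (rule A_blocks[OF k qq pp]) (metis R)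
  have ij: "i2 = i" "j2 = j" using b1 b2 pp qq by auto
  have x1: "i*k+0 < k*l" "i*k+r < k*l" using lt_blk pp k0 by auto
  have "r2 = r"
  proof (rule ccontr)
    assume "r2 \<noteq> r"
    then have "dA k i2 j2 r2 s2 s2' (i*k+0) \<noteq> dA k i2 j2 r2 s2 s2' (i*k+r)"
      using dA_blk[of 0 k r2 s2 s2'] dA_blk[of r k r2 s2 s2'] pp qq ij by auto
    moreover have "dA k i j r s s' (i*k+0) = dA k i j r s s' (i*k+r)"
      using dA_blk[of 0 k r s s'] dA_blk[of r k r s s'] pp by auto
    ultimately show False using R[OF x1] by simp
  qed
  have S: "(w = s \<or> w = s') \<longleftrightarrow> (w = s2 \<or> w = s2')" if w: "w < k" for w
  proof -
    have x2: "i*k+0 < k*l" "j*k+w < k*l" using lt_blk pp k0 w by auto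
    have "dA k i j r s s' (i*k+0) = dA k i j r s s' (j*k+w) \<longleftrightarrow> \<not> (w = s \<or> w = s')"
      using dA_blk[of 0 k r s s'] dA_blk[of w k r s s'] pp w by auto
    moreover have "dA k i2 j2 r2 s2 s2' (i*k+0) = dA k i2 j2 r2 s2 s2' (j*k+w) \<longleftrightarrow> \<not> (w = s2 \<or> w = s2')"
      using dA_blk[of 0 k r2 s2 s2'] dA_blk[of w k r2 s2 s2'] pp qq ij w by auto
    ultimately show ?thesis using R[OF x2] by blast
  qed
  have "s2 = s \<and> s2' = s'" using S[of s] S[of s'] S[of s2] S[of s2'] pp qq by auto
  then show "p = q" using p0 q0 ij \<open>r2 = r\<close> by simp
qed

lemma A_orbit:
  assumes G: "G = Alt (k*l) \<or> G = Sym (k*l)" and k: "4 \<le> k" and l: "2 \<le> l" and p: "p \<in> IA k l"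
  shows "FA k l p \<in> stab_orbit G part_act (alpha0 k l) (FA k l ((0,1),1,(0,1)))"
proof -
  obtain i j r s s' where p0: "p = ((i,j),r,(s,s'))" by (metis prod.exhaust)
  have k0: "0 < k" using k by simp
  have pp: "i < j" "j < l" "0 < r" "r < k" "s < s'" "s' < k" using p p0 by (auto simp: IA_def I2_def)
  have "\<exists>g. g permutes {0..<k*l} \<and> part_act g (alpha0 k l) = alpha0 k l \<and>
    g (0*k+0) = i*k+0 \<and> g (0*k+1) = i*k+r \<and> g (1*k+0) = j*k+s \<and> g (1*k+1) = j*k+s'"
    by (rule make_g[OF k0]) (use pp k l in auto)
  then obtain g where g: "g permutes {0..<k*l}" "part_act g (alpha0 k l) = alpha0 k l"
    "g (0*k+0) = i*k+0" "g (0*k+1) = i*k+r" "g (1*k+0) = j*k+s" "g (1*k+1) = j*k+s'" by blast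
  have gam: "FA k l ((0,1),1,(0,1)) = part_act (tp 0 k \<circ> tp 1 (k+1)) (alpha0 k l)" by (simp add: FA_def)
  have img: "part_act g (FA k l ((0,1),1,(0,1))) = FA k l p"
    unfolding gam conj_act2[OF g(1,2)] using g(3-6) p0 by (simp add: FA_def)
  have n: "3 < k*l" "k+1 < k*l" using k l lt_blk[of 1 l 1 k] by (auto simp: mult.commute)
  have tau: "tp 2 3 permutes {0..<k*l}" using tp_perm n by auto
  have tau2: "\<not> evenperm (tp 2 3)" by (simp add: evenperm_swap)
  have tau3: "part_act (tp 2 3) (alpha0 k l) = alpha0 k l" using fix_within[OF k0, of 2 l 3] n k by auto
  have com: "tp 2 3 \<circ> (tp 0 k \<circ> tp 1 (k+1)) = (tp 0 k \<circ> tp 1 (k+1)) \<circ> tp 2 3"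
  proof -
    have c1: "tp 2 3 \<circ> tp 0 k = tp 0 k \<circ> tp 2 3" using tp_commute[of 2 0 k 3] k by simp
    have c2: "tp 2 3 \<circ> tp 1 (k+1) = tp 1 (k+1) \<circ> tp 2 3" using tp_commute[of 2 1 "k+1" 3] k by simp
    show ?thesis by (metis comp_assoc c1 c2)
  qed
  have tau4: "part_act (tp 2 3) (FA k l ((0,1),1,(0,1))) = FA k l ((0,1),1,(0,1))"
    unfolding gam part_act_comp[symmetric] com by (simp add: part_act_comp tau3)
  show ?thesis using orbit_lower[OF G g(1,2) tau tau2 tau3 tau4] img by simp
qed

definition FC :: "nat \<Rightarrow> nat \<Rightarrow> nat \<times> nat \<times> nat \<Rightarrow> nat set set" where
  "FC k l = (\<lambda>(x,y,z). part_act (tp x y \<circ> tp y z) (alpha0 k l))"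

definition dC :: "nat \<Rightarrow> nat \<Rightarrow> nat \<Rightarrow> nat \<Rightarrow> nat \<Rightarrow> nat" where
  "dC k x y z p = (if p = x then z div k else if p = y then x div k else if p = z then y div k else p div k)"

definition TB :: "nat \<Rightarrow> nat \<Rightarrow> nat set \<Rightarrow> (nat \<times> nat \<times> nat) set" where
  "TB k l U = {(x,y,z). x < k*l \<and> y < k*l \<and> z < k*l \<and> x div k < y div k \<and> x div k < z div k \<and> y div k \<noteq> z div k \<and> x mod k \<in> U}"

lemma dC_eval:
  assumes "x \<noteq> y" "y \<noteq> z" "x \<noteq> z"
  shows "tp y z (tp x y p) div k = dC k x y z p"
  using assms unfolding dC_def by (auto simp: transpose_def)

lemma FC_rel:
  assumes k: "0 < k" and T: "(x,y,z) \<in> TB k l U" "(x',y',z') \<in> TB k l U'"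
    and eq: "FC k l (x,y,z) = FC k l (x',y',z')" and p: "p < k*l" and q: "q < k*l"
  shows "(dC k x y z p = dC k x y z q) \<longleftrightarrow> (dC k x' y' z' p = dC k x' y' z' q)"
proof -
  have d: "x \<noteq> y" "y \<noteq> z" "x \<noteq> z" "x' \<noteq> y'" "y' \<noteq> z'" "x' \<noteq> z'" using T unfolding TB_def by auto
  have pts: "x < k*l" "y < k*l" "y < k*l" "z < k*l" "x' < k*l" "y' < k*l" "y' < k*l" "z' < k*l" using T unfolding TB_def by auto
  have "(tp y z (tp x y p) div k = tp y z (tp x y q) div k) \<longleftrightarrow> (tp y' z' (tp x' y' p) div k = tp y' z' (tp x' y' q) div k)"
    by (rule R2[OF k pts _ p q]) (use eq in \<open>simp add: FC_def\<close>)
  then show ?thesis using dC_eval d by simp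
qed

lemma other_in_blk:
  assumes "2 \<le> k" "p < k*(l::nat)"
  shows "\<exists>q. q < k*l \<and> q div k = p div k \<and> q \<noteq> p"
proof -
  let ?m = "p div k"
  let ?q = "?m*k + (if p mod k = 0 then 1 else 0)"
  have "?q div k = ?m" "?q mod k = (if p mod k = 0 then 1 else 0)" using assms by auto
  moreover have "?q < k*l" using lt_blk[of ?m l "if p mod k = 0 then 1 else 0" k] assms div_less_l by auto
  moreover have "?q \<noteq> p" by (metis calculation(2) div_mult_mod_eq mod_mult_self1_is_0 add.commute zero_neq_one mod_add_self2 mod_mod_trivial)
  ultimately show ?thesis by metis
qed



lemma other_in_blk3:
  assumes "3 \<le> k" "p < k*(l::nat)" "p' div k = p div k"
  shows "\<exists>q. q < k*l \<and> q div k = p div k \<and> q \<noteq> p \<and> q \<noteq> p'"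
proof -
  let ?m = "p div k"
  have m: "?m < l" using assms div_less_l by auto
  have c: "(?m*k + t) div k = ?m" "?m*k+t < k*l" if "t < 3" for t using that assms lt_blk[OF m, of t k] by auto
  have "?m*k+0 \<noteq> ?m*k+1" "?m*k+0 \<noteq> ?m*k+2" "?m*k+1 \<noteq> ?m*k+2" by auto
  then obtain t where "t < 3" "?m*k+t \<noteq> p" "?m*k+t \<noteq> p'"
    by (metis less_Suc_eq numeral_3_eq_3 numeral_2_eq_2 One_nat_def)
  then show ?thesis using c by metis
qed

lemma intact_iff:
  assumes k: "2 \<le> k" and T: "(x,y,z) \<in> TB k l U" and m: "m < l"
  shows "(\<forall>p q. p < k*l \<longrightarrow> q < k*l \<longrightarrow> p div k = m \<longrightarrow> q div k = m \<longrightarrow> dC k x y z p = dC k x y z q)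
    \<longleftrightarrow> m \<notin> {x div k, y div k, z div k}"
proof -
  have t: "x < k*l" "y < k*l" "z < k*l" "x div k < y div k" "x div k < z div k" "y div k \<noteq> z div k"
    using T unfolding TB_def by auto
  have nm: "dC k x y z p = m" if "p div k = m" "m \<notin> {x div k, y div k, z div k}" for p
    using that unfolding dC_def by auto
  show ?thesis
  proof
    assume A: "\<forall>p q. p < k*l \<longrightarrow> q < k*l \<longrightarrow> p div k = m \<longrightarrow> q div k = m \<longrightarrow> dC k x y z p = dC k x y z q"
    show "m \<notin> {x div k, y div k, z div k}"
    proof
      assume "m \<in> {x div k, y div k, z div k}"
      then obtain a where a: "a \<in> {x,y,z}" "a div k = m" by auto
      obtain q where q: "q < k*l" "q div k = a div k" "q \<noteq> a" using other_in_blk[OF k] a t by blast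
      have "q \<notin> {x,y,z}" using q a t by auto
      then have "dC k x y z q = m" using q a unfolding dC_def by auto
      moreover have "dC k x y z a \<noteq> m" using a t unfolding dC_def by auto
      moreover have an: "a < k*l" using a t by auto
      moreover have "q div k = m" using q a by simp
      ultimately show False using A q(1) a(2) by metis
    qed
  qed (use nm in auto)
qed

lemma FC_inj:
  assumes k: "2 \<le> k" and U: "(k = 2 \<and> U = {0}) \<or> 3 \<le> k"
  shows "inj_on (FC k l) (TB k l U)"
proof (rule inj_onI)
  fix T T' assume T: "T \<in> TB k l U" and T': "T' \<in> TB k l U" and eq: "FC k l T = FC k l T'"
  obtain x y z where T0: "T = (x,y,z)" by (metis prod.exhaust)
  obtain x' y' z' where T0': "T' = (x',y',z')" by (metis prod.exhaust)
  have k0: "0 < k" using k by simp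
  have t: "x < k*l" "y < k*l" "z < k*l" "x div k < y div k" "x div k < z div k" "y div k \<noteq> z div k" "x mod k \<in> U"
    using T T0 unfolding TB_def by auto
  have t': "x' < k*l" "y' < k*l" "z' < k*l" "x' div k < y' div k" "x' div k < z' div k" "y' div k \<noteq> z' div k" "x' mod k \<in> U"
    using T' T0' unfolding TB_def by auto
  have R: "\<And>p q. p < k*l \<Longrightarrow> q < k*l \<Longrightarrow> (dC k x y z p = dC k x y z q) \<longleftrightarrow> (dC k x' y' z' p = dC k x' y' z' q)"
    using FC_rel[OF k0] T T' eq T0 T0' by blast
  have bl: "m \<in> {x div k, y div k, z div k} \<longleftrightarrow> m \<in> {x' div k, y' div k, z' div k}" if "m < l" for m
    using intact_iff[OF k, of x y z l U m] intact_iff[OF k, of x' y' z' l U m] T T' T0 T0' that R by auto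
  have lb: "x div k < l" "y div k < l" "z div k < l" "x' div k < l" "y' div k < l" "z' div k < l"
    using t t' div_less_l[OF k0] by auto
  have bl2: "{x div k, y div k, z div k} = {x' div k, y' div k, z' div k}"
    using bl[OF lb(1)] bl[OF lb(2)] bl[OF lb(3)] bl[OF lb(4)] bl[OF lb(5)] bl[OF lb(6)] by auto
  have xb: "x div k = x' div k" using bl2 t(4,5) t'(4,5)
    by (metis insert_iff le_antisym less_imp_le singleton_iff)
  have xx: "x' = x"
  proof (cases "3 \<le> k")
    case False
    then have "x mod k = 0" "x' mod k = 0" using U t(7) t'(7) by auto
    then show ?thesis using xb by (metis div_mult_mod_eq)
  next
    case True
    show ?thesis
    proof (rule ccontr)
      assume ne: "x' \<noteq> x"
      obtain q where q: "q < k*l" "q div k = x div k" "q \<noteq> x" "q \<noteq> x'" using other_in_blk3[OF True t(1)] xb by metis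
      have "dC k x y z x' = x div k" "dC k x y z q = x div k" using ne q xb t t' unfolding dC_def by auto
      moreover have "dC k x' y' z' x' \<noteq> dC k x' y' z' q" using ne q xb t t' unfolding dC_def by auto
      ultimately show False using R[OF t'(1) q(1)] by simp
    qed
  qed
  have yy: "y' = y"
  proof (rule ccontr)
    assume ne: "y' \<noteq> y"
    obtain p where p: "p < k*l" "p div k = x div k" "p \<noteq> x" using other_in_blk[OF k t(1)] by blast
    have "dC k x y z p = dC k x y z y" using p t unfolding dC_def by auto
    moreover have "dC k x' y' z' p \<noteq> dC k x' y' z' y" using p t t' ne xx unfolding dC_def by auto
    ultimately show False using R[OF p(1) t(2)] by simp
  qed
  have zb: "z' div k = z div k"
  proof -
    have "z' div k \<in> {x div k, y div k, z div k}" using bl2 by auto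
    then show ?thesis using xx yy t t' by auto
  qed
  have zz: "z' = z"
  proof (rule ccontr)
    assume ne: "z' \<noteq> z"
    have "dC k x y z x \<noteq> dC k x y z z" using t unfolding dC_def by auto
    moreover have "dC k x' y' z' x = dC k x' y' z' z" using t t' ne xx yy zb unfolding dC_def by auto
    ultimately show False using R[OF t(1) t(3)] by simp
  qed
  show "T = T'" using T0 T0' xx yy zz by simp
qed

lemma make_g3:
  assumes k: "0 < k" and l: "3 \<le> l" and d: "d0 \<noteq> d1" "d0 \<noteq> d2" "d1 \<noteq> d2" "d0 < l" "d1 < l" "d2 < l"
    and u: "u0 < k" "u1 < k" "u2 < k"
  shows "\<exists>g. g permutes {0..<k*l} \<and> part_act g (alpha0 k l) = alpha0 k l \<and>
    g (0*k+0) = d0*k+u0 \<and> g (1*k+0) = d1*k+u1 \<and> g (2*k+0) = d2*k+u2"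
proof -
  have "\<exists>p. p permutes {0..<l} \<and> (\<forall>x\<in>{0,1,2}. p x = (if x = 0 then d0 else if x = 1 then d1 else d2))"
    by (rule perm_exists) (use d l in \<open>auto simp: inj_on_def\<close>)
  then obtain \<sigma> where \<sigma>: "\<sigma> permutes {0..<l}" "\<sigma> 0 = d0" "\<sigma> 1 = d1" "\<sigma> 2 = d2" by force
  define \<tau> where "\<tau> c = (if c = 0 then tp 0 u0 else if c = 1 then tp 0 u1 else if c = 2 then tp 0 u2 else id)" for c :: nat
  have \<tau>p: "\<And>c. c < l \<Longrightarrow> \<tau> c permutes {0..<k}" unfolding \<tau>_def using u k tp_perm permutes_id by auto
  have E: "(\<lambda>x. if x < k*l then \<sigma> (x div k) * k + \<tau> (x div k) (x mod k) else x) permutes {0..<k*l}"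
    "part_act (\<lambda>x. if x < k*l then \<sigma> (x div k) * k + \<tau> (x div k) (x mod k) else x) (alpha0 k l) = alpha0 k l"
    "\<And>c u. c < l \<Longrightarrow> u < k \<Longrightarrow> (\<lambda>x. if x < k*l then \<sigma> (x div k) * k + \<tau> (x div k) (x mod k) else x) (c*k+u) = \<sigma> c * k + \<tau> c u"
    using ext_perm[of k \<sigma> l \<tau>] k \<sigma>(1) \<tau>p by auto
  define g where "g = (\<lambda>x. if x < k*l then \<sigma> (x div k) * k + \<tau> (x div k) (x mod k) else x)"
  have g1: "g permutes {0..<k*l}" "part_act g (alpha0 k l) = alpha0 k l" using E(1,2) unfolding g_def by auto
  have g3: "g (c*k+uu) = \<sigma> c * k + \<tau> c uu" if "c < l" "uu < k" for c uu using E(3)[OF that] unfolding g_def by simp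
  have "g (0*k+0) = d0*k+u0" "g (1*k+0) = d1*k+u1" "g (2*k+0) = d2*k+u2"
    using g3[of 0 0] g3[of 1 0] g3[of 2 0] k l \<sigma> unfolding \<tau>_def by auto
  then show ?thesis using g1 by blast
qed

lemma gammaC_odd:
  assumes k: "2 \<le> k" and l: "3 \<le> l"
  shows "\<exists>\<tau>. \<tau> permutes {0..<k*l} \<and> \<not> evenperm \<tau> \<and> part_act \<tau> (alpha0 k l) = alpha0 k l \<and>
    part_act \<tau> (FC k l (0, k, 2*k)) = FC k l (0, k, 2*k)"
proof -
  have k0: "0 < k" using k by simp
  have gam: "FC k l (0, k, 2*k) = part_act (tp 0 k \<circ> tp k (2*k)) (alpha0 k l)" by (simp add: FC_def)
  have comm: "part_act \<tau> (FC k l (0, k, 2*k)) = FC k l (0, k, 2*k)"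
    if "\<tau> \<circ> (tp 0 k \<circ> tp k (2*k)) = (tp 0 k \<circ> tp k (2*k)) \<circ> \<tau>" "part_act \<tau> (alpha0 k l) = alpha0 k l" for \<tau>
    unfolding gam part_act_comp[symmetric] that(1) by (simp add: part_act_comp that(2))
  have n3: "3*k \<le> k*l" using l by (simp add: mult.commute)
  consider "3 \<le> k" | "k = 2" "4 \<le> l" | "k = 2" "l = 3" using k l by linarith
  then show ?thesis
  proof cases
    case 1
    have "3*3 \<le> k*l" using 1 l mult_le_mono by blast
    then have n: "1 < k*l" "2 < k*l" by auto
    have a: "part_act (tp 1 2) (alpha0 k l) = alpha0 k l" using fix_within[OF k0 n] 1 by auto
    have c1: "tp 1 2 \<circ> tp 0 k = tp 0 k \<circ> tp 1 2" using tp_commute[of 1 0 k 2] 1 by simp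
    have c2: "tp 1 2 \<circ> tp k (2*k) = tp k (2*k) \<circ> tp 1 2" using tp_commute[of 1 k "2*k" 2] 1 by simp
    have "tp 1 2 \<circ> (tp 0 k \<circ> tp k (2*k)) = (tp 0 k \<circ> tp k (2*k)) \<circ> tp 1 2" by (metis comp_assoc c1 c2)
    then show ?thesis using comm a tp_perm[OF n] by (auto simp: evenperm_swap)
  next
    case 2
    have n: "6 < k*l" "7 < k*l" using 2 by auto
    have a: "part_act (tp 6 7) (alpha0 k l) = alpha0 k l" using fix_within[OF k0 n] 2 by auto
    have c1: "tp 6 7 \<circ> tp 0 k = tp 0 k \<circ> tp 6 7" using tp_commute[of 6 0 k 7] 2 by simp
    have c2: "tp 6 7 \<circ> tp k (2*k) = tp k (2*k) \<circ> tp 6 7" using tp_commute[of 6 k "2*k" 7] 2 by simp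
    have "tp 6 7 \<circ> (tp 0 k \<circ> tp k (2*k)) = (tp 0 k \<circ> tp k (2*k)) \<circ> tp 6 7" by (metis comp_assoc c1 c2)
    then show ?thesis using comm a tp_perm[OF n] by (auto simp: evenperm_swap)
  next
    case 3
    define \<tau> where "\<tau> = tp 0 1 \<circ> tp 2 5 \<circ> tp 3 4"
    have n: "k*l = 6" using 3 by simp
    have tp6: "\<tau> permutes {0..<6}" unfolding \<tau>_def by (intro permutes_compose tp_perm) auto
    have ev: "\<not> evenperm \<tau>"
    proof -
      have p: "permutation (tp 0 1 \<circ> tp 2 5)" "permutation (tp 3 4)" "permutation (tp 0 1)" "permutation (tp 2 5)"
        by (auto intro: permutation_compose permutation_swap_id)
      show ?thesis unfolding \<tau>_def using evenperm_comp[OF p(1,2)] evenperm_comp[OF p(3,4)] by (simp add: evenperm_swap)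
    qed
    have inv\<tau>: "\<And>x. \<tau> (\<tau> x) = x" unfolding \<tau>_def by (auto simp: transpose_def)
    have six: "x < 6 \<Longrightarrow> x = 0 \<or> x = 1 \<or> x = 2 \<or> x = 3 \<or> x = 4 \<or> x = 5" for x::nat by auto
    have a: "part_act \<tau> (alpha0 2 3) = alpha0 2 3"
    proof -
      have "part_act \<tau> (alpha0 2 3) = part_act id (alpha0 2 3)"
      proof (rule conv_block[where s="\<tau>" and s'=id, of 2 \<tau> 3])
        show "\<tau> permutes {0..<2*3}" using tp6 by simp
        show "id permutes {0..<2*3}" by (rule permutes_id)
        define h :: "nat \<Rightarrow> nat" where "h c = (if c = 1 then 2 else if c = 2 then 1 else c)" for c
        have hv: "\<tau> x div 2 = h (x div 2)" if "x < 6" for x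
          using six[OF that] unfolding \<tau>_def h_def by (elim disjE) (simp_all add: transpose_def)
        have hi: "h a = h b \<longleftrightarrow> a = b" for a b unfolding h_def by auto
        fix x y :: nat assume "x < 2*3" "y < 2*3"
        then show "(\<tau> x div 2 = \<tau> y div 2) = (id x div 2 = id y div 2)"
          using hv[of x] hv[of y] hi by simp
      qed (simp_all add: inv\<tau>)
      then show ?thesis by (simp add: part_act_id)
    qed
    have b: "part_act \<tau> (FC 2 3 (0, 2, 4)) = FC 2 3 (0, 2, 4)"
    proof -
      have g: "FC 2 3 (0, 2, 4) = part_act (tp 0 2 \<circ> tp 2 4) (alpha0 2 3)" by (simp add: FC_def)
      have "part_act (\<tau> \<circ> (tp 0 2 \<circ> tp 2 4)) (alpha0 2 3) = part_act (tp 0 2 \<circ> tp 2 4) (alpha0 2 3)"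
      proof (rule conv_block[where s="tp 2 4 \<circ> tp 0 2 \<circ> \<tau>" and s'="tp 2 4 \<circ> tp 0 2", of 2 _ 3])
        show "\<tau> \<circ> (tp 0 2 \<circ> tp 2 4) permutes {0..<2*3}"
          using tp6 by (intro permutes_compose tp_perm) auto
        show "tp 0 2 \<circ> tp 2 4 permutes {0..<2*3}" by (intro permutes_compose tp_perm) auto
        define h :: "nat \<Rightarrow> nat" where "h c = (if c = 0 then 2 else if c = 2 then 0 else c)" for c
        have hv: "(tp 2 4 \<circ> tp 0 2 \<circ> \<tau>) x div 2 = h ((tp 2 4 \<circ> tp 0 2) x div 2)" if "x < 6" for x
          using six[OF that] unfolding \<tau>_def h_def by (elim disjE) (simp_all add: transpose_def)
        have hi: "h a = h b \<longleftrightarrow> a = b" for a b unfolding h_def by auto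
        fix x y :: nat assume "x < 2*3" "y < 2*3"
        then show "((tp 2 4 \<circ> tp 0 2 \<circ> \<tau>) x div 2 = (tp 2 4 \<circ> tp 0 2 \<circ> \<tau>) y div 2) =
          ((tp 2 4 \<circ> tp 0 2) x div 2 = (tp 2 4 \<circ> tp 0 2) y div 2)"
          using hv[of x] hv[of y] hi by simp
      qed (simp_all add: inv\<tau>)
      then show ?thesis unfolding g part_act_comp .
    qed
    show ?thesis using 3 tp6 ev a b by auto
  qed
qed

lemma C_orbit:
  assumes G: "G = Alt (k*l) \<or> G = Sym (k*l)" and k: "2 \<le> k" and l: "3 \<le> l" and T: "T \<in> TB k l U"
  shows "FC k l T \<in> stab_orbit G part_act (alpha0 k l) (FC k l (0, k, 2*k))"
proof -
  obtain x y z where T0: "T = (x,y,z)" by (metis prod.exhaust)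
  have k0: "0 < k" using k by simp
  have t: "x < k*l" "y < k*l" "z < k*l" "x div k < y div k" "x div k < z div k" "y div k \<noteq> z div k"
    using T T0 unfolding TB_def by auto
  have lb: "x div k < l" "y div k < l" "z div k < l" using t div_less_l[OF k0] by auto
  have "\<exists>g. g permutes {0..<k*l} \<and> part_act g (alpha0 k l) = alpha0 k l \<and>
    g (0*k+0) = (x div k)*k+(x mod k) \<and> g (1*k+0) = (y div k)*k+(y mod k) \<and> g (2*k+0) = (z div k)*k+(z mod k)"
    by (rule make_g3[OF k0 l]) (use t lb k0 in auto)
  then obtain g where g: "g permutes {0..<k*l}" "part_act g (alpha0 k l) = alpha0 k l"
    "g 0 = x" "g k = y" "g (2*k) = z" by auto
  have gam: "FC k l (0, k, 2*k) = part_act (tp 0 k \<circ> tp k (2*k)) (alpha0 k l)" by (simp add: FC_def)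
  have img: "part_act g (FC k l (0, k, 2*k)) = FC k l T"
    unfolding gam conj_act2[OF g(1,2)] using g(3-5) T0 by (simp add: FC_def)
  obtain \<tau> where \<tau>: "\<tau> permutes {0..<k*l}" "\<not> evenperm \<tau>" "part_act \<tau> (alpha0 k l) = alpha0 k l"
    "part_act \<tau> (FC k l (0, k, 2*k)) = FC k l (0, k, 2*k)" using gammaC_odd[OF k l] by blast
  show ?thesis using orbit_lower[OF G g(1,2) \<tau>] img by simp
qed

lemma Omega_finite: "finite (uniform_partitions k l)"
  by (rule finite_subset[OF _ finitely_many_partition_on[of "{0..<k*l}"]]) (auto simp: uniform_partitions_def)

lemma orbit_sub:
  assumes G: "G = Alt (k*l) \<or> G = Sym (k*l)" and b: "\<beta> \<in> uniform_partitions k l"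
  shows "stab_orbit G part_act \<alpha> \<beta> \<subseteq> uniform_partitions k l"
  using part_act_in[OF _ b] G_perm[OF G] unfolding stab_orbit_def by auto

lemma orbit_fin:
  assumes G: "G = Alt (k*l) \<or> G = Sym (k*l)" and b: "\<beta> \<in> uniform_partitions k l"
  shows "finite (stab_orbit G part_act \<alpha> \<beta>)"
  using finite_subset[OF orbit_sub[OF G b] Omega_finite] .

lemma TB_card:
  assumes k: "0 < k" and U: "U \<subseteq> {0..<k}"
  shows "card (I3 l) * card U * k * k * 2 \<le> card (TB k l U)"
proof -
  define M where "M = (\<lambda>((i,j,h),u,v,w,e::bool). (i*k+u, if e then j*k+v else h*k+w, if e then h*k+w else j*k+v))"
  let ?P = "I3 l \<times> U \<times> {0..<k} \<times> {0..<k} \<times> (UNIV :: bool set)"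
  have sub: "M ` ?P \<subseteq> TB k l U"
  proof
    fix T assume "T \<in> M ` ?P"
    then obtain i j h u v w e where p: "(i,j,h) \<in> I3 l" "u \<in> U" "v < k" "w < k" and T: "T = M ((i,j,h),u,v,w,e)" by auto
    have ijh: "i < j" "j < h" "h < l" "u < k" using p U unfolding I3_def by auto
    have d: "(i*k+u) div k = i" "(j*k+v) div k = j" "(h*k+w) div k = h" "(i*k+u) mod k = u" using ijh p by auto
    have lt: "i*k+u < k*l" "j*k+v < k*l" "h*k+w < k*l" using lt_blk ijh p by auto
    show "T \<in> TB k l U" unfolding T M_def TB_def using d lt ijh p by auto
  qed
  have inj: "inj_on M ?P"
  proof (rule inj_onI)
    fix a b assume a: "a \<in> ?P" and b: "b \<in> ?P" and e: "M a = M b"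
    obtain i j h u v w ea where a0: "a = ((i,j,h),u,v,w,ea)" by (metis prod.exhaust)
    obtain i' j' h' u' v' w' eb where b0: "b = ((i',j',h'),u',v',w',eb)" by (metis prod.exhaust)
    have A: "i < j" "j < h" "u < k" "v < k" "w < k" using a a0 U unfolding I3_def by auto
    have B: "i' < j'" "j' < h'" "u' < k" "v' < k" "w' < k" using b b0 U unfolding I3_def by auto
    have e1: "i*k+u = i'*k+u'" and e2: "(if ea then j*k+v else h*k+w) = (if eb then j'*k+v' else h'*k+w')"
      and e3: "(if ea then h*k+w else j*k+v) = (if eb then h'*k+w' else j'*k+v')" using e a0 b0 unfolding M_def by auto
    have "i = i' \<and> u = u'" using e1 eq_blk A B by blast
    moreover have "ea = eb"
    proof (rule ccontr)
      assume "ea \<noteq> eb"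
      then have "(ea \<and> j = h' \<and> h = j') \<or> (eb \<and> h = j' \<and> j = h')"
        using e2 e3 eq_blk A B by (cases ea) auto
      then show False using A B by auto
    qed
    moreover have "j = j' \<and> v = v' \<and> h = h' \<and> w = w'"
      using e2 e3 eq_blk A B \<open>ea = eb\<close> by (cases ea) auto
    ultimately show "a = b" using a0 b0 by simp
  qed
  have fin: "finite (TB k l U)"
    by (rule finite_subset[of _ "{0..<k*l} \<times> {0..<k*l} \<times> {0..<k*l}"]) (auto simp: TB_def)
  have "card ?P = card (I3 l) * card U * k * k * 2"
    by (simp add: card_cartesian_product)
  moreover have "card ?P \<le> card (TB k l U)"
    using card_image[OF inj] card_mono[OF fin sub] by simp
  ultimately show ?thesis by simp
qed

lemma neq_alpha0:
  assumes k: "0 < k" and t: "t permutes {0..<k*l}" and st: "\<And>x. s (t x) = x" and ts: "\<And>x. t (s x) = x"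
    and xy: "x < k*l" "y < k*l" "x div k = y div k" "s x div k \<noteq> s y div k"
  shows "part_act t (alpha0 k l) \<noteq> alpha0 k l"
proof
  assume "part_act t (alpha0 k l) = alpha0 k l"
  then have "part_act t (alpha0 k l) = part_act id (alpha0 k l)" by (simp add: part_act_id)
  from same_block[OF k t st ts permutes_id _ _ this xy(1,2), of id] xy(3,4) show False by simp
qed

lemma card_le_of_sub:
  assumes "finite B" "A \<subseteq> f ` C" "finite C" shows "card A \<le> card C"
  by (meson assms card_image_le card_mono finite_imageI le_trans)

lemma not_three_halves:
  assumes G: "G = Alt (k*l) \<or> G = Sym (k*l)" and k: "2 \<le> k" and l: "2 \<le> l" and kl: "5 \<le> k*l"
    and ne: "(k, l) \<noteq> (3, 2)"
  shows "\<not> three_halves_transitive G (uniform_partitions k l) part_act"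
proof
  assume H: "three_halves_transitive G (uniform_partitions k l) part_act"
  have k0: "0 < k" using k by simp
  let ?\<Omega> = "uniform_partitions k l"
  let ?a = "alpha0 k l"
  have a: "?a \<in> ?\<Omega>" using alpha0_in[OF k0] .
  then obtain m where m: "\<And>\<beta>. \<beta> \<in> ?\<Omega> - {?a} \<Longrightarrow> card (stab_orbit G part_act ?a \<beta>) = m"
    using H unfolding three_halves_transitive_def by blast
  have lt: "c*k+u < k*l" if "c < l" "u < k" for c u using lt_blk that by blast
  have ptk1: "k < k*l" using lt[of 1 0] l k0 by simp
  have ptk: "k < k*l" "0 < k*l" "1 < k*l" "2 < k*l" using ptk1 k by linarith+
  let ?b = "part_act (tp 0 k) ?a"
  have bp: "tp 0 k permutes {0..<k*l}" using tp_perm ptk by auto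
  have bO: "?b \<in> ?\<Omega>" using part_act_in[OF bp a] .
  have bne: "?b \<noteq> ?a"
    by (rule neq_alpha0[OF k0 bp, of "tp 0 k" 0 1]) (use k ptk in \<open>auto simp: transpose_def\<close>)
  have c2: "2 * card (I2 l) = l * (l - 1)" by (rule card_I2)
  have c3: "6 * card (I3 l) = l * (l - 1) * (l - 2)" by (rule card_I3)
  have c2pos: "1 \<le> card (I2 l)" using c2 l by (cases l) auto
  consider "4 \<le> k" | "k = 3" "3 \<le> l" | "k = 2" "3 \<le> l" using k l kl ne by (cases "k = 3"; cases "k = 2") auto
  then show False
  proof cases
    case 1
    let ?g = "FA k l ((0,1),1,(0,1))"
    have gg: "?g = part_act (tp 0 k \<circ> tp 1 (k+1)) ?a" by (simp add: FA_def)
    have gp: "tp 0 k \<circ> tp 1 (k+1) permutes {0..<k*l}" using tp2_perm lt[of 1 1] lt[of 0 1] ptk l 1 by auto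
    have gO: "?g \<in> ?\<Omega>" using part_act_in[OF gp a] gg by simp
    have gne: "?g \<noteq> ?a" unfolding gg
      by (rule neq_alpha0[OF k0 gp, of "tp 1 (k+1) \<circ> tp 0 k" 0 2]) (use 1 ptk in \<open>auto simp: transpose_def\<close>)
    have up: "card (stab_orbit G part_act ?a ?b) \<le> card (I2 l \<times> {0..<k} \<times> {0..<k})"
      by (rule card_le_of_sub[OF Omega_finite O1_upper[OF G k0 l]]) (simp add: I2_fin)
    have "card (IA k l) \<le> card (stab_orbit G part_act ?a ?g)"
    proof -
      have "FA k l ` IA k l \<subseteq> stab_orbit G part_act ?a ?g" using A_orbit[OF G 1 l] by auto
      then have "card (FA k l ` IA k l) \<le> card (stab_orbit G part_act ?a ?g)"
        using card_mono[OF orbit_fin[OF G gO]] by blast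
      then show ?thesis using card_image[OF A_inj[OF 1]] by simp
    qed
    moreover have "card (I2 l \<times> {0..<k} \<times> {0..<k}) < card (IA k l)"
    proof -
      have ck: "2 * card (I2 k) = k * (k - 1)" by (rule card_I2)
      have "card (I2 l \<times> {0..<k} \<times> {0..<k}) = card (I2 l) * (k * k)" by (simp add: card_cartesian_product)
      moreover have "card (IA k l) = card (I2 l) * ((k - 1) * card (I2 k))" by (simp add: IA_def card_cartesian_product)
      moreover have "k * k < (k - 1) * card (I2 k)"
      proof -
        obtain j where j: "k = j + 4" using 1 by (metis add.commute le_Suc_ex)
        have "2 * (k * k) < 2 * ((k - 1) * card (I2 k))"
          using ck unfolding j by (simp add: algebra_simps)
        then show ?thesis by simp
      qed
      ultimately show ?thesis using c2pos by simp
    qed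
    ultimately have "card (stab_orbit G part_act ?a ?b) < card (stab_orbit G part_act ?a ?g)" using up by linarith
    then show False using m[of ?b] m[of ?g] bO bne gO gne by simp
  next
    case 2
    let ?g = "FC k l (0, k, 2*k)"
    have gg: "?g = part_act (tp 0 k \<circ> tp k (2*k)) ?a" by (simp add: FC_def)
    have gp: "tp 0 k \<circ> tp k (2*k) permutes {0..<k*l}" using tp2_perm lt[of 2 0] lt[of 1 0] ptk 2 by auto
    have gO: "?g \<in> ?\<Omega>" using part_act_in[OF gp a] gg by simp
    have gne: "?g \<noteq> ?a" unfolding gg
      by (rule neq_alpha0[OF k0 gp, of "tp k (2*k) \<circ> tp 0 k" 0 1]) (use 2 ptk in \<open>auto simp: transpose_def\<close>)
    have up: "card (stab_orbit G part_act ?a ?b) \<le> card (I2 l \<times> {0..<k} \<times> {0..<k})"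
      by (rule card_le_of_sub[OF Omega_finite O1_upper[OF G k0 l]]) (simp add: I2_fin)
    have "card (TB k l {0..<k}) \<le> card (stab_orbit G part_act ?a ?g)"
    proof -
      have "FC k l ` TB k l {0..<k} \<subseteq> stab_orbit G part_act ?a ?g" using C_orbit[OF G k 2(2)] by auto
      then have "card (FC k l ` TB k l {0..<k}) \<le> card (stab_orbit G part_act ?a ?g)"
        using card_mono[OF orbit_fin[OF G gO]] by blast
      then show ?thesis using card_image[OF FC_inj[OF k]] 2 by simp
    qed
    moreover have "card (I2 l \<times> {0..<k} \<times> {0..<k}) < card (I3 l) * card {0..<k} * k * k * 2"
    proof -
      have "card (I2 l \<times> {0..<k} \<times> {0..<k}) = card (I2 l) * 9" using 2 by (simp add: card_cartesian_product)
      moreover have "2 * (card (I2 l) * 9) < 2 * (card (I3 l) * 54)"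
      proof -
        obtain j where j: "l = j + 3" using 2 by (metis add.commute le_Suc_ex)
        have "6 * (2 * (card (I2 l) * 9)) = 54 * (l * (l - 1))" using c2 by simp
        also have "\<dots> < 108 * (l * (l - 1) * (l - 2))" unfolding j by (simp add: algebra_simps)
        also have "\<dots> = 6 * (2 * (card (I3 l) * 54))" using c3 by simp
        finally show ?thesis by simp
      qed
      ultimately show ?thesis using 2 by simp
    qed
    moreover note TB_card[OF k0, of "{0..<k}" l]
    ultimately have "card (stab_orbit G part_act ?a ?b) < card (stab_orbit G part_act ?a ?g)" using up by simp
    then show False using m[of ?b] m[of ?g] bO bne gO gne by simp
  next
    case 3
    let ?g = "FC k l (0, k, 2*k)"
    have gg: "?g = part_act (tp 0 k \<circ> tp k (2*k)) ?a" by (simp add: FC_def)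
    have gp: "tp 0 k \<circ> tp k (2*k) permutes {0..<k*l}" using tp2_perm lt[of 2 0] lt[of 1 0] ptk 3 by auto
    have gO: "?g \<in> ?\<Omega>" using part_act_in[OF gp a] gg by simp
    have gne: "?g \<noteq> ?a" unfolding gg
      by (rule neq_alpha0[OF k0 gp, of "tp k (2*k) \<circ> tp 0 k" 0 1]) (use 3 ptk in \<open>auto simp: transpose_def\<close>)
    have G2: "G = Alt (2*l) \<or> G = Sym (2*l)" using G 3 by simp
    have up: "card (stab_orbit G part_act ?a ?b) \<le> card (I2 l \<times> {0..<2::nat})"
      using card_le_of_sub[OF Omega_finite O1_upper2[OF G2 l]] I2_fin 3 by simp
    have "card (TB k l {0}) \<le> card (stab_orbit G part_act ?a ?g)"
    proof -
      have "FC k l ` TB k l {0} \<subseteq> stab_orbit G part_act ?a ?g" using C_orbit[OF G k 3(2)] by auto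
      then have "card (FC k l ` TB k l {0}) \<le> card (stab_orbit G part_act ?a ?g)"
        using card_mono[OF orbit_fin[OF G gO]] by blast
      then show ?thesis using card_image[OF FC_inj[OF k]] 3 by simp
    qed
    moreover have "card (I2 l \<times> {0..<2::nat}) < card (I3 l) * card {0::nat} * k * k * 2"
    proof -
      have "card (I2 l \<times> {0..<2::nat}) = card (I2 l) * 2" by (simp add: card_cartesian_product)
      moreover have "card (I2 l) * 2 < card (I3 l) * 8"
      proof -
        obtain j where j: "l = j + 3" using 3 by (metis add.commute le_Suc_ex)
        have "6 * (card (I2 l) * 2) = 6 * (l * (l - 1))" using c2 by simp
        also have "\<dots> < 8 * (l * (l - 1) * (l - 2))" unfolding j by (simp add: algebra_simps)
        also have "\<dots> = 6 * (card (I3 l) * 8)" using c3 by simp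
        finally show ?thesis by simp
      qed
      ultimately show ?thesis using 3 by simp
    qed
    moreover note TB_card[OF k0, of "{0}" l]
    ultimately have "card (stab_orbit G part_act ?a ?b) < card (stab_orbit G part_act ?a ?g)" using up k0 by simp
    then show False using m[of ?b] m[of ?g] bO bne gO gne by simp
  qed
qed

lemma alpha32: "alpha0 3 2 = {{0..<3}, {3..<6}}"
proof -
  have "{0..<2::nat} = {0,1}" by auto
  then show ?thesis by (simp add: alpha0_def blk_def)
qed

lemma tp_img: "a \<in> A \<Longrightarrow> b \<notin> A \<Longrightarrow> tp a b ` A = insert b (A - {a})"
  by (auto simp: transpose_def image_iff)

lemma P32:
  assumes P: "P \<in> uniform_partitions 3 2"
  shows "P = alpha0 3 2 \<or> (\<exists>a b. a < 3 \<and> 3 \<le> b \<and> b < 6 \<and> P = part_act (tp a b) (alpha0 3 2))"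
proof -
  let ?X = "{0..<3::nat}" and ?Y = "{3..<6::nat}"
  have PP: "partition_on {0..<6} P" "card P = 2" "\<forall>B\<in>P. card B = 3" using P unfolding uniform_partitions_def by auto
  obtain B C where BC: "P = {B, C}" "B \<noteq> C" using PP(2) card_2_iff by metis
  have U: "B \<union> C = {0..<6}" using PP(1) BC unfolding partition_on_def by auto
  have D: "B \<inter> C = {}" using PP(1) BC unfolding partition_on_def disjoint_def by auto
  have cB: "card B = 3" "card C = 3" using PP(3) BC by auto
  have main: "P = alpha0 3 2 \<or> (\<exists>a b. a < 3 \<and> 3 \<le> b \<and> b < 6 \<and> P = part_act (tp a b) (alpha0 3 2))"
    if BC': "P = {B', C'}" and U': "B' \<union> C' = {0..<6}" and D': "B' \<inter> C' = {}" and c': "card B' = 3"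
      and two: "2 \<le> card (?X \<inter> B')" for B' C'
  proof -
    have C': "C' = {0..<6} - B'" using U' D' by auto
    have fB: "finite B'" using U' by (metis finite_Un finite_atLeastLessThan)
    have le3: "card (?X \<inter> B') \<le> 3" using card_mono[of ?X "?X \<inter> B'"] by auto
    show ?thesis
    proof (cases "card (?X \<inter> B') = 3")
      case True
      then have "?X \<inter> B' = ?X" using card_subset_eq[of ?X "?X \<inter> B'"] by auto
      then have "?X \<subseteq> B'" by auto
      then have "?X = B'" using card_subset_eq[OF fB] c' by simp
      then have "B' = ?X" by simp
      then have "C' = ?Y" using C' by auto
      then show ?thesis using \<open>B' = ?X\<close> BC' alpha32 by auto
    next
      case False
      then have c2: "card (?X \<inter> B') = 2" using two le3 by simp
      have "card (?X - B') = 1" using c2 card_Diff_subset_Int[of ?X B'] by (simp add: Int_commute)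
      then obtain a where a: "?X - B' = {a}" using card_1_singletonE by blast
      have "card (B' - ?X) = 1" using c2 c' card_Diff_subset_Int[of B' ?X] fB by (simp add: Int_commute)
      then obtain b where b: "B' - ?X = {b}" using card_1_singletonE by blast
      have ab: "a < 3" "3 \<le> b" "b < 6" using a b U' by auto
      have B'e: "B' = insert b (?X - {a})" using a b by auto
      have "tp a b ` ?X = B'" using tp_img[of a ?X b] ab B'e by auto
      moreover have "tp a b ` ?Y = C'" using tp_img[of b ?Y a] ab C' B'e
        by (auto simp: transpose_commute) 
      ultimately have "P = part_act (tp a b) (alpha0 3 2)" using BC' alpha32 unfolding part_act_def by auto
      then show ?thesis using ab by blast
    qed
  qed
  have fX: "?X \<inter> B \<inter> (?X \<inter> C) = {}" using D by auto
  have "card (?X \<inter> B) + card (?X \<inter> C) = 3"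
    using card_Un_disjoint[of "?X \<inter> B" "?X \<inter> C"] fX U by (simp add: Int_Un_distrib[symmetric])
  then consider "2 \<le> card (?X \<inter> B)" | "2 \<le> card (?X \<inter> C)" by linarith
  then show ?thesis
  proof cases
    case 1 then show ?thesis using main[OF BC(1) U D cB(1)] by blast
  next
    case 2 then show ?thesis using main[of C B] BC U D cB by (auto simp: insert_commute Un_commute Int_commute)
  qed
qed

lemma G_inv:
  assumes G: "G = Alt n \<or> G = Sym n" and g: "g \<in> G" shows "inv g \<in> G"
proof -
  have p: "g permutes {0..<n}" using G_perm[OF G g] .
  have "inv g permutes {0..<n}" using permutes_inv[OF p] .
  moreover have "evenperm (inv g) = evenperm g" using evenperm_inv permutes_imp_permutation[OF _ p] by simp
  ultimately show ?thesis using G g unfolding Alt_def Sym_def by auto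
qed

lemma G_comp:
  assumes G: "G = Alt n \<or> G = Sym n" and g: "g \<in> G" and h: "h \<in> G" shows "g \<circ> h \<in> G"
proof -
  have p: "g permutes {0..<n}" "h permutes {0..<n}" using G_perm[OF G] g h by auto
  have "g \<circ> h permutes {0..<n}" using permutes_compose[OF p(2,1)] .
  moreover have "evenperm (g \<circ> h) = (evenperm g = evenperm h)"
    using evenperm_comp permutes_imp_permutation[OF _ p(1)] permutes_imp_permutation[OF _ p(2)] by simp
  ultimately show ?thesis using G g h unfolding Alt_def Sym_def by auto
qed

lemma part_act_inv:
  assumes g: "g permutes S"
  shows "part_act (inv g) (part_act g P) = P" "part_act g (part_act (inv g) P) = P"
  using permutes_inv_o[OF g] by (simp_all add: part_act_comp[symmetric] part_act_id)

lemma trans32: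
  assumes G: "G = Alt (3*2) \<or> G = Sym (3*2)" and P: "P \<in> uniform_partitions 3 2"
  shows "\<exists>g\<in>G. part_act g (alpha0 3 2) = P"
proof -
  consider "P = alpha0 3 2" | a b where "a < 3" "3 \<le> b" "b < 6" "P = part_act (tp a b) (alpha0 3 2)"
    using P32[OF P] by blast
  then show ?thesis
  proof cases
    case 1
    have "id \<in> G" using G permutes_id unfolding Alt_def Sym_def by auto
    then show ?thesis using 1 part_act_id by metis
  next
    case 2
    have p: "tp a b permutes {0..<3*2}" "tp 1 2 permutes {0..<3*2}" using 2 tp_perm by auto
    have "tp a b \<circ> tp 1 2 permutes {0..<3*2}" using permutes_compose[OF p(2,1)] .
    moreover have "evenperm (tp a b \<circ> tp 1 2)"
      using evenperm_comp[OF permutation_swap_id permutation_swap_id, of a b 1 2] 2 by (simp add: evenperm_swap)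
    ultimately have g: "tp a b \<circ> tp 1 2 \<in> G" using G unfolding Alt_def Sym_def by auto
    have "part_act (tp 1 2) (alpha0 3 2) = alpha0 3 2" by (rule fix_within) auto
    then have "part_act (tp a b \<circ> tp 1 2) (alpha0 3 2) = P" using 2 by (simp add: part_act_comp)
    then show ?thesis using g by blast
  qed
qed

lemma stab32:
  assumes G: "G = Alt (3*2) \<or> G = Sym (3*2)" and P: "P \<in> uniform_partitions 3 2" and ne: "P \<noteq> alpha0 3 2"
  shows "\<exists>u\<in>G. part_act u (alpha0 3 2) = alpha0 3 2 \<and> part_act u (part_act (tp 0 3) (alpha0 3 2)) = P"
proof -
  obtain a b where ab: "a < 3" "3 \<le> b" "b < 6" "P = part_act (tp a b) (alpha0 3 2)" using P32[OF P] ne by blast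
  let ?h = "tp 0 a \<circ> tp 3 b"
  have hp: "?h permutes {0..<3*2}" using ab by (intro permutes_compose tp_perm) auto
  have f1: "part_act (tp 0 a) (alpha0 3 2) = alpha0 3 2" by (rule fix_within) (use ab in auto)
  have f2: "part_act (tp 3 b) (alpha0 3 2) = alpha0 3 2" by (rule fix_within) (use ab in auto)
  have ha: "part_act ?h (alpha0 3 2) = alpha0 3 2" using f1 f2 by (simp add: part_act_comp)
  have hv: "?h 0 = a" "?h 3 = b" using ab by (auto simp: transpose_def)
  have img: "part_act ?h (part_act (tp 0 3) (alpha0 3 2)) = P" using conj_act[OF hp ha] hv ab by simp
  have t1: "tp 1 2 permutes {0..<3*2}" by (rule tp_perm) auto
  have t2: "\<not> evenperm (tp 1 2)" by (simp add: evenperm_swap)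
  have t3: "part_act (tp 1 2) (alpha0 3 2) = alpha0 3 2" by (rule fix_within) auto
  have t4: "part_act (tp 1 2) (part_act (tp 0 3) (alpha0 3 2)) = part_act (tp 0 3) (alpha0 3 2)"
  proof -
    have "tp 1 2 \<circ> tp 0 3 = tp 0 3 \<circ> tp 1 2" using tp_commute[of 1 0 3 2] by simp
    then have "part_act (tp 1 2 \<circ> tp 0 3) (alpha0 3 2) = part_act (tp 0 3 \<circ> tp 1 2) (alpha0 3 2)" by simp
    then show ?thesis unfolding part_act_comp t3 .
  qed
  have "part_act ?h (part_act (tp 0 3) (alpha0 3 2)) \<in> stab_orbit G part_act (alpha0 3 2) (part_act (tp 0 3) (alpha0 3 2))"
    by (rule orbit_lower[OF G hp ha t1 t2 t3 t4])
  then show ?thesis using img unfolding stab_orbit_def by auto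
qed

lemma two_trans32:
  assumes G: "G = Alt (3*2) \<or> G = Sym (3*2)"
  shows "two_transitive G (uniform_partitions 3 2) part_act"
proof -
  let ?\<Omega> = "uniform_partitions 3 2" and ?a = "alpha0 3 2" and ?b = "part_act (tp 0 3) (alpha0 3 2)"
  have aO: "?a \<in> ?\<Omega>" by (rule alpha0_in) simp
  have perm: "\<And>g. g \<in> G \<Longrightarrow> g permutes {0..<3*2}" using G_perm[OF G] .
  have inO: "\<And>g P. g \<in> G \<Longrightarrow> P \<in> ?\<Omega> \<Longrightarrow> part_act g P \<in> ?\<Omega>" using part_act_in perm by blast
  have T: "transitive_on G ?\<Omega> part_act"
    unfolding transitive_on_def
  proof (intro conjI ballI)
    show "?\<Omega> \<noteq> {}" using aO by auto
    fix x y assume x: "x \<in> ?\<Omega>" and y: "y \<in> ?\<Omega>"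
    obtain g1 where g1: "g1 \<in> G" "part_act g1 ?a = x" using trans32[OF G x] by blast
    obtain g2 where g2: "g2 \<in> G" "part_act g2 ?a = y" using trans32[OF G y] by blast
    have "g2 \<circ> inv g1 \<in> G" using G_comp[OF G g2(1) G_inv[OF G g1(1)]] .
    moreover have "part_act (g2 \<circ> inv g1) x = y"
      using g1 g2 part_act_inv[OF perm[OF g1(1)]] by (auto simp: part_act_comp)
    ultimately show "\<exists>g\<in>G. part_act g x = y" by blast
  qed
  have M: "\<exists>g\<in>G. part_act g \<alpha> = \<gamma> \<and> part_act g \<beta> = \<delta>"
    if a: "\<alpha> \<in> ?\<Omega>" "\<beta> \<in> ?\<Omega>" "\<gamma> \<in> ?\<Omega>" "\<delta> \<in> ?\<Omega>" "\<alpha> \<noteq> \<beta>" "\<gamma> \<noteq> \<delta>" for \<alpha> \<beta> \<gamma> \<delta>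
  proof -
    obtain g1 where g1: "g1 \<in> G" "part_act g1 ?a = \<alpha>" using trans32[OF G a(1)] by blast
    obtain g2 where g2: "g2 \<in> G" "part_act g2 ?a = \<gamma>" using trans32[OF G a(3)] by blast
    have i1: "inv g1 \<in> G" "inv g2 \<in> G" using G_inv[OF G] g1 g2 by auto
    let ?b' = "part_act (inv g1) \<beta>" and ?d' = "part_act (inv g2) \<delta>"
    have b'O: "?b' \<in> ?\<Omega>" "?d' \<in> ?\<Omega>" using inO i1 a by auto
    have b'ne: "?b' \<noteq> ?a"
    proof
      assume "?b' = ?a"
      then have "part_act g1 ?b' = \<alpha>" using g1 by simp
      then show False using part_act_inv(2)[OF perm[OF g1(1)]] a(5) by simp
    qed
    have d'ne: "?d' \<noteq> ?a"
    proof
      assume "?d' = ?a"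
      then have "part_act g2 ?d' = \<gamma>" using g2 by simp
      then show False using part_act_inv(2)[OF perm[OF g2(1)]] a(6) by simp
    qed
    obtain u where u: "u \<in> G" "part_act u ?a = ?a" "part_act u ?b = ?b'" using stab32[OF G b'O(1) b'ne] by blast
    obtain v where v: "v \<in> G" "part_act v ?a = ?a" "part_act v ?b = ?d'" using stab32[OF G b'O(2) d'ne] by blast
    have iu: "inv u \<in> G" using G_inv[OF G u(1)] .
    have iua: "part_act (inv u) ?a = ?a" using part_act_inv(1)[OF perm[OF u(1)], of ?a] u(2) by simp
    have iub: "part_act (inv u) ?b' = ?b" using part_act_inv(1)[OF perm[OF u(1)], of ?b] u(3) by simp
    define g where "g = g2 \<circ> v \<circ> inv u \<circ> inv g1"
    have "g \<in> G" unfolding g_def using G_comp[OF G] g1 g2 v iu i1 by metis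
    moreover have "part_act g \<alpha> = \<gamma>"
    proof -
      have "part_act (inv g1) \<alpha> = ?a" using part_act_inv(1)[OF perm[OF g1(1)]] g1(2) by metis
      then show ?thesis unfolding g_def using iua v(2) g2(2) by (simp add: part_act_comp)
    qed
    moreover have "part_act g \<beta> = \<delta>"
      unfolding g_def using iub v(3) part_act_inv(2)[OF perm[OF g2(1)]] by (simp add: part_act_comp)
    ultimately show ?thesis by blast
  qed
  show ?thesis unfolding two_transitive_def using T M by blast
qed

lemma three_halves32:
  assumes G: "G = Alt (3*2) \<or> G = Sym (3*2)"
  shows "three_halves_transitive G (uniform_partitions 3 2) part_act"
proof -
  let ?\<Omega> = "uniform_partitions 3 2" and ?a = "alpha0 3 2"
  have TT: "two_transitive G ?\<Omega> part_act" by (rule two_trans32[OF G])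
  then have T: "transitive_on G ?\<Omega> part_act" unfolding two_transitive_def by blast
  have perm: "\<And>g. g \<in> G \<Longrightarrow> g permutes {0..<3*2}" using G_perm[OF G] .
  have orb: "stab_orbit G part_act \<alpha> \<beta> = ?\<Omega> - {\<alpha>}" if a: "\<alpha> \<in> ?\<Omega>" "\<beta> \<in> ?\<Omega> - {\<alpha>}" for \<alpha> \<beta>
  proof
    show "stab_orbit G part_act \<alpha> \<beta> \<subseteq> ?\<Omega> - {\<alpha>}"
    proof
      fix x assume "x \<in> stab_orbit G part_act \<alpha> \<beta>"
      then obtain g where g: "g \<in> G" "part_act g \<alpha> = \<alpha>" "x = part_act g \<beta>" unfolding stab_orbit_def by blast
      have "x \<in> ?\<Omega>" using part_act_in[OF perm[OF g(1)]] a g by auto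
      moreover have "x \<noteq> \<alpha>"
      proof
        assume "x = \<alpha>"
        then have "part_act (inv g) (part_act g \<beta>) = part_act (inv g) (part_act g \<alpha>)" using g by simp
        then show False using part_act_inv(1)[OF perm[OF g(1)]] a by simp
      qed
      ultimately show "x \<in> ?\<Omega> - {\<alpha>}" by blast
    qed
    show "?\<Omega> - {\<alpha>} \<subseteq> stab_orbit G part_act \<alpha> \<beta>"
    proof
      fix d assume d: "d \<in> ?\<Omega> - {\<alpha>}"
      then obtain g where "g \<in> G" "part_act g \<alpha> = \<alpha>" "part_act g \<beta> = d"
        using TT a unfolding two_transitive_def by (metis DiffD1 DiffD2 singletonI)
      then show "d \<in> stab_orbit G part_act \<alpha> \<beta>" unfolding stab_orbit_def by blast
    qed
  qed
  have three: "3 \<le> card ?\<Omega>"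
  proof -
    have k0: "(0::nat) < 3" by simp
    let ?b = "part_act (tp 0 3) ?a" and ?c = "part_act (tp 0 4) ?a"
    have p: "tp 0 3 permutes {0..<3*2}" "tp 0 4 permutes {0..<3*2}" by (auto intro: tp_perm)
    have aO: "?a \<in> ?\<Omega>" by (rule alpha0_in) simp
    have bO: "?b \<in> ?\<Omega>" "?c \<in> ?\<Omega>" using part_act_in[OF p(1) aO] part_act_in[OF p(2) aO] by auto
    have n1: "?b \<noteq> ?a" by (rule neq_alpha0[OF k0 p(1), of "tp 0 3" 0 1]) (auto simp: transpose_def)
    have n2: "?c \<noteq> ?a" by (rule neq_alpha0[OF k0 p(2), of "tp 0 4" 0 1]) (auto simp: transpose_def)
    have n3: "?b \<noteq> ?c"
    proof
      assume e: "?b = ?c"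
      have "(tp 0 3 0 div 3 = tp 0 3 4 div 3) \<longleftrightarrow> (tp 0 4 0 div 3 = tp 0 4 4 div 3)"
        by (rule same_block[OF k0 p(1) _ _ p(2) _ _ e]) auto
      then show False by (simp add: transpose_def)
    qed
    have "{?a, ?b, ?c} \<subseteq> ?\<Omega>" using aO bO by auto
    moreover have "card {?a, ?b, ?c} = 3" using n1 n2 n3 by auto
    ultimately show ?thesis using card_mono[OF Omega_finite] by metis
  qed
  show ?thesis unfolding three_halves_transitive_def
  proof (intro conjI ballI)
    show "transitive_on G ?\<Omega> part_act" by (rule T)
    fix \<alpha> assume a: "\<alpha> \<in> ?\<Omega>"
    have "card (?\<Omega> - {\<alpha>}) = card ?\<Omega> - 1" using a Omega_finite by simp
    then show "\<exists>m>1. \<forall>\<beta>\<in>?\<Omega> - {\<alpha>}. card (stab_orbit G part_act \<alpha> \<beta>) = m"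
      using orb[OF a] three by (intro exI[of _ "card ?\<Omega> - 1"]) auto
  qed
qed

theorem lemma4p4:
  fixes k l :: nat and G :: "(nat \<Rightarrow> nat) set"
  assumes "k \<ge> 2" and "l \<ge> 2" and "k * l \<ge> 5"
    and "G = Alt (k * l) \<or> G = Sym (k * l)"
  shows "(three_halves_transitive G (uniform_partitions k l) part_act \<longleftrightarrow> (k, l) = (3, 2))
         \<and> ((k, l) = (3, 2) \<longrightarrow> two_transitive G (uniform_partitions k l) part_act)"
proof (cases "(k, l) = (3, 2)")
  case True
  then have kl: "k = 3" "l = 2" by auto
  have G: "G = Alt (3*2) \<or> G = Sym (3*2)" using assms(4) kl by simp
  show ?thesis using three_halves32[OF G] two_trans32[OF G] kl by simp
next
  case False
  then show ?thesis using not_three_halves[OF assms(4) assms(1) assms(2) assms(3) False] by auto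
qed

end
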